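(* Let $g\in L^2(\mathbb{R}^3)$ be even or odd. Then for every $\theta\in\mathbb{R}$, $\mathbf{D}_g(\theta)$ is Fréchet differentiable at every point $(u,\alpha)\in L^2(\mathbb{R}^3)\oplus L^2(\mathbb{R}^3)$, and for all $(v_1,\beta_1),(v_2,\beta_2)\in L^2\oplus L^2$, $$\mathrm{Im}\langle d\mathbf{D}_g(\theta)_{(u,\alpha)}(v_1,\beta_1),d\mathbf{D}_g(\theta)_{(u,\alpha)}(v_2,\beta_2)\rangle_{L^2\oplus L^2}=\mathrm{Im}\langle(v_1,\beta_1),(v_2,\beta_2)\rangle_{L^2\oplus L^2}.$$
   Context: For even or odd $g\in L^2$, $\mathbf{D}_g(\theta)(u,\alpha)=(u\,e^{-i\theta A_g},\ \alpha-i\theta gF(|u|^2))$ with $A_g(x)=\int(g(k)\bar\alpha(k)e^{-ik\cdot x}+\bar g(k)\alpha(k)e^{ik\cdot x})dk$ and $F(|u|^2)(k)=\int e^{-ik\cdot x}|u(x)|^2dx$. $d\mathbf{D}_g(\theta)_{(u,\alpha)}$ denotes the Fréchet derivative at $(u,\alpha)$, $L^2\oplus L^2$ being regarded as a real Hilbert space. *)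

theory Defs
  imports "HOL-Analysis.Analysis"
begin

text \<open>Complex-valued functions on R^3; L^2 is represented by square-integrable
  representatives, all identities in L^2 being understood almost everywhere.\<close>

type_synonym fn3 = "real^3 \<Rightarrow> complex"
type_synonym fn3pair = "fn3 \<times> fn3"

definition L2 :: "fn3 set" where
  "L2 = {f. f \<in> borel_measurable lebesgue \<and> integrable lebesgue (\<lambda>x. (cmod (f x))^2)}"

definition L2P :: "fn3pair set" where
  "L2P = L2 \<times> L2"

definition l2_inner :: "fn3 \<Rightarrow> fn3 \<Rightarrow> complex" where
  "l2_inner f h = integral\<^sup>L lebesgue (\<lambda>x. cnj (f x) * h x)"

definition l2_norm :: "fn3 \<Rightarrow> real" where
  "l2_norm f = sqrt (integral\<^sup>L lebesgue (\<lambda>x. (cmod (f x))^2))"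

definition pinner :: "fn3pair \<Rightarrow> fn3pair \<Rightarrow> complex" where
  "pinner p q = l2_inner (fst p) (fst q) + l2_inner (snd p) (snd q)"

definition pnorm :: "fn3pair \<Rightarrow> real" where
  "pnorm p = sqrt ((l2_norm (fst p))^2 + (l2_norm (snd p))^2)"

definition pae_eq :: "fn3pair \<Rightarrow> fn3pair \<Rightarrow> bool" where
  "pae_eq p q \<longleftrightarrow> (AE x in lebesgue. fst p x = fst q x) \<and> (AE x in lebesgue. snd p x = snd q x)"

definition padd :: "fn3pair \<Rightarrow> fn3pair \<Rightarrow> fn3pair" where
  "padd p q = (\<lambda>x. fst p x + fst q x, \<lambda>x. snd p x + snd q x)"

definition pdiff :: "fn3pair \<Rightarrow> fn3pair \<Rightarrow> fn3pair" where
  "pdiff p q = (\<lambda>x. fst p x - fst q x, \<lambda>x. snd p x - snd q x)"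

definition pscale :: "real \<Rightarrow> fn3pair \<Rightarrow> fn3pair" where
  "pscale a p = (\<lambda>x. of_real a * fst p x, \<lambda>x. of_real a * snd p x)"

definition Fsq :: "fn3 \<Rightarrow> fn3" where
  "Fsq u k = integral\<^sup>L lebesgue (\<lambda>x. exp (- \<i> * of_real (k \<bullet> x)) * of_real ((cmod (u x))^2))"

definition A_g :: "fn3 \<Rightarrow> fn3 \<Rightarrow> fn3" where
  "A_g g \<alpha> x = integral\<^sup>L lebesgue (\<lambda>k. g k * cnj (\<alpha> k) * exp (- \<i> * of_real (k \<bullet> x))
                                         + cnj (g k) * \<alpha> k * exp (\<i> * of_real (k \<bullet> x)))"

definition D_g :: "fn3 \<Rightarrow> real \<Rightarrow> fn3pair \<Rightarrow> fn3pair" where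
  "D_g g \<theta> p = (\<lambda>x. fst p x * exp (- \<i> * of_real \<theta> * A_g g (snd p) x),
                 \<lambda>k. snd p k - \<i> * of_real \<theta> * g k * Fsq (fst p) k)"

definition frechet_deriv_at :: "(fn3pair \<Rightarrow> fn3pair) \<Rightarrow> fn3pair \<Rightarrow> (fn3pair \<Rightarrow> fn3pair) \<Rightarrow> bool" where
  "frechet_deriv_at D p L \<longleftrightarrow>
     (\<forall>h\<in>L2P. L h \<in> L2P) \<and>
     (\<forall>a::real. \<forall>h1\<in>L2P. \<forall>h2\<in>L2P.
         pae_eq (L (padd (pscale a h1) h2)) (padd (pscale a (L h1)) (L h2))) \<and>
     (\<exists>C. \<forall>h\<in>L2P. pnorm (L h) \<le> C * pnorm h) \<and>
     (\<forall>\<epsilon>>0. \<exists>\<delta>>0. \<forall>h\<in>L2P. pnorm h < \<delta> \<longrightarrow>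
         pnorm (pdiff (pdiff (D (padd p h)) (D p)) (L h)) \<le> \<epsilon> * pnorm h)"

definition even_fn :: "fn3 \<Rightarrow> bool" where
  "even_fn g \<longleftrightarrow> (AE k in lebesgue. g (- k) = g k)"

definition odd_fn :: "fn3 \<Rightarrow> bool" where
  "odd_fn g \<longleftrightarrow> (AE k in lebesgue. g (- k) = - g k)"

end

theory Submission
  imports Defs "HOL-Probability.Characteristic_Functions"
begin

lemma sigma_finite_lebesgue: "sigma_finite_measure (lebesgue :: ('a::euclidean_space) measure)"
proof -
  obtain A :: "'a set set" where A: "countable A" "A \<subseteq> sets lborel" "\<Union>A = space lborel"
     "\<forall>a\<in>A. emeasure lborel a \<noteq> \<infinity>"
    using sigma_finite_measure.sigma_finite_countable[OF sigma_finite_lborel] by blast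
  show ?thesis
    apply (unfold_locales)
    apply (rule exI[of _ A])
    using A by auto
qed

interpretation leb: sigma_finite_measure "lebesgue :: (real^3) measure"
  by (rule sigma_finite_lebesgue)

interpretation leb2: pair_sigma_finite "lebesgue :: (real^3) measure" "lebesgue :: (real^3) measure" ..

lemma id_leb_borel: "(\<lambda>x. x) \<in> lebesgue \<rightarrow>\<^sub>M (borel :: ('a::euclidean_space) measure)"
  by (rule measurable_completion) simp

lemma exp_inner_meas:
  "(\<lambda>z::(real^3)\<times>(real^3). exp (- \<i> * complex_of_real (fst z \<bullet> snd z))) \<in> borel_measurable (lebesgue \<Otimes>\<^sub>M lebesgue)"
proof -
  have f: "(\<lambda>z::(real^3)\<times>(real^3). fst z) \<in> borel_measurable (lebesgue \<Otimes>\<^sub>M lebesgue)"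
    by (rule measurable_compose[OF measurable_fst id_leb_borel])
  have s: "(\<lambda>z::(real^3)\<times>(real^3). snd z) \<in> borel_measurable (lebesgue \<Otimes>\<^sub>M lebesgue)"
    by (rule measurable_compose[OF measurable_snd id_leb_borel])
  show ?thesis using f s by measurable
qed

lemma sq_sum_le: "((x::real) + y)^2 \<le> 2 * x^2 + 2 * y^2"
proof -
  have "0 \<le> (x - y)^2" by simp
  then show ?thesis unfolding power2_sum power2_diff by linarith
qed

lemma prod_le_sq: "(x::real) * y \<le> x^2 + y^2" if "0 \<le> x" "0 \<le> y"
proof -
  have "0 \<le> (x - y)^2" by simp
  then have "2 * x * y \<le> x^2 + y^2" unfolding power2_diff by linarith
  moreover have "0 \<le> x * y" using that by simp
  ultimately show ?thesis by linarith
qed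

lemma borel_measurable_cnj[measurable (raw)]:
  "f \<in> borel_measurable M \<Longrightarrow> (\<lambda>x. cnj (f x)) \<in> borel_measurable M"
  by (rule borel_measurable_continuous_on[where f=cnj]) (auto intro: continuous_intros)

definition nsq :: "fn3 \<Rightarrow> real" where
  "nsq f = integral\<^sup>L lebesgue (\<lambda>x. (cmod (f x))^2)"

lemma nsq_nonneg: "0 \<le> nsq f"
  unfolding nsq_def by (rule Bochner_Integration.integral_nonneg_AE) auto

lemma l2_norm_nsq: "l2_norm f = sqrt (nsq f)"
  unfolding l2_norm_def nsq_def ..

lemma l2_norm_sq: "(l2_norm f)^2 = nsq f"
  unfolding l2_norm_nsq using nsq_nonneg by simp

lemma l2_norm_nonneg: "0 \<le> l2_norm f"
  unfolding l2_norm_nsq by (simp add: nsq_nonneg)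

lemma L2_meas: "f \<in> L2 \<Longrightarrow> f \<in> borel_measurable lebesgue"
  unfolding L2_def by auto

lemma L2_int: "f \<in> L2 \<Longrightarrow> integrable lebesgue (\<lambda>x. (cmod (f x))^2)"
  unfolding L2_def by auto

lemma L2I: "f \<in> borel_measurable lebesgue \<Longrightarrow> integrable lebesgue (\<lambda>x. (cmod (f x))^2) \<Longrightarrow> f \<in> L2"
  unfolding L2_def by auto

lemma L2_bound:
  assumes "f \<in> L2" "h \<in> borel_measurable lebesgue" "\<And>x. cmod (h x) \<le> c * cmod (f x)"
  shows "h \<in> L2"
proof (rule L2I[OF assms(2)])
  show "integrable lebesgue (\<lambda>x. (cmod (h x))^2)"
  proof (rule Bochner_Integration.integrable_bound[OF integrable_mult_right[OF L2_int[OF assms(1)], of "c^2"]])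
    show "(\<lambda>x. (cmod (h x))\<^sup>2) \<in> borel_measurable lebesgue" using assms(2) by measurable
    show "AE x in lebesgue. norm ((cmod (h x))\<^sup>2) \<le> norm (c\<^sup>2 * (cmod (f x))\<^sup>2)"
    proof (rule AE_I2)
      fix x
      have "0 \<le> cmod (h x)" by simp
      then have "(cmod (h x))^2 \<le> (c * cmod (f x))^2" using assms(3)[of x]
        by (simp add: power_mono)
      then show "norm ((cmod (h x))\<^sup>2) \<le> norm (c\<^sup>2 * (cmod (f x))\<^sup>2)"
        by (simp add: power_mult_distrib)
    qed
  qed
qed

lemma L2_mult_bounded:
  assumes "f \<in> L2" "c \<in> borel_measurable lebesgue" "\<And>x. cmod (c x) \<le> B"
  shows "(\<lambda>x. c x * f x) \<in> L2"
proof (rule L2_bound[OF assms(1), of _ B])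
  show "(\<lambda>x. c x * f x) \<in> borel_measurable lebesgue" using assms L2_meas by measurable
  fix x show "cmod (c x * f x) \<le> B * cmod (f x)"
    using assms(3)[of x] by (simp add: norm_mult mult_right_mono)
qed

lemma L2_cmult: "f \<in> L2 \<Longrightarrow> (\<lambda>x. c * f x) \<in> L2"
  by (rule L2_mult_bounded[of f "\<lambda>_. c" "cmod c"]) auto

lemma L2_add:
  assumes "f \<in> L2" "h \<in> L2"
  shows "(\<lambda>x. f x + h x) \<in> L2"
proof (rule L2I)
  show "(\<lambda>x. f x + h x) \<in> borel_measurable lebesgue" using assms L2_meas by measurable
  show "integrable lebesgue (\<lambda>x. (cmod (f x + h x))\<^sup>2)"
  proof (rule Bochner_Integration.integrable_bound[OF Bochner_Integration.integrable_add[OF integrable_mult_right[OF L2_int[OF assms(1)], of 2]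
        integrable_mult_right[OF L2_int[OF assms(2)], of 2]]])
    show "(\<lambda>x. (cmod (f x + h x))\<^sup>2) \<in> borel_measurable lebesgue" using assms L2_meas by measurable
    show "AE x in lebesgue. norm ((cmod (f x + h x))\<^sup>2) \<le> norm (2 * (cmod (f x))\<^sup>2 + 2 * (cmod (h x))\<^sup>2)"
    proof (rule AE_I2)
      fix x
      have t: "cmod (f x + h x) \<le> cmod (f x) + cmod (h x)" by (rule norm_triangle_ineq)
      have "(cmod (f x + h x))^2 \<le> (cmod (f x) + cmod (h x))^2"
        using t by (simp add: power_mono)
      also have "\<dots> \<le> 2 * (cmod (f x))\<^sup>2 + 2 * (cmod (h x))\<^sup>2"
        by (rule sq_sum_le)
      finally show "norm ((cmod (f x + h x))\<^sup>2) \<le> norm (2 * (cmod (f x))\<^sup>2 + 2 * (cmod (h x))\<^sup>2)"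
        by simp
    qed
  qed
qed

lemma L2_diff: "f \<in> L2 \<Longrightarrow> h \<in> L2 \<Longrightarrow> (\<lambda>x. f x - h x) \<in> L2"
  using L2_add[of f "\<lambda>x. (-1) * h x"] L2_cmult[of h "-1"] by simp

lemma L2_zero: "(\<lambda>x. 0) \<in> L2"
  by (rule L2I) auto

lemma L2_cnj: "f \<in> L2 \<Longrightarrow> (\<lambda>x. cnj (f x)) \<in> L2"
  by (rule L2_bound[of f _ 1]) (auto intro: L2_meas borel_measurable_cnj)

lemma integrable_L2_prod:
  assumes "f \<in> L2" "h \<in> L2"
  shows "integrable lebesgue (\<lambda>x. f x * h x)"
proof (rule Bochner_Integration.integrable_bound[OF Bochner_Integration.integrable_add[OF L2_int[OF assms(1)] L2_int[OF assms(2)]]])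
  show "(\<lambda>x. f x * h x) \<in> borel_measurable lebesgue" using assms L2_meas by measurable
  show "AE x in lebesgue. norm (f x * h x) \<le> norm ((cmod (f x))\<^sup>2 + (cmod (h x))\<^sup>2)"
  proof (rule AE_I2)
    fix x
    have "cmod (f x) * cmod (h x) \<le> (cmod (f x))\<^sup>2 + (cmod (h x))\<^sup>2"
      by (rule prod_le_sq) auto
    then show "norm (f x * h x) \<le> norm ((cmod (f x))\<^sup>2 + (cmod (h x))\<^sup>2)"
      by (simp add: norm_mult)
  qed
qed

lemma integrable_L2_abs_prod:
  assumes "f \<in> L2" "h \<in> L2"
  shows "integrable lebesgue (\<lambda>x. cmod (f x) * cmod (h x))"
  using integrable_norm[OF integrable_L2_prod[OF assms]] by (simp add: norm_mult)

lemma nsq_bound2: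
  assumes "f1 \<in> L2" "f2 \<in> L2" "0 \<le> c1" "0 \<le> c2"
    and "\<And>x. cmod (R x) \<le> c1 * cmod (f1 x) + c2 * cmod (f2 x)"
  shows "nsq R \<le> 2 * c1^2 * nsq f1 + 2 * c2^2 * nsq f2"
proof (cases "integrable lebesgue (\<lambda>x. (cmod (R x))^2)")
  case True
  have "nsq R \<le> integral\<^sup>L lebesgue (\<lambda>x. 2 * c1^2 * (cmod (f1 x))^2 + 2 * c2^2 * (cmod (f2 x))^2)"
    unfolding nsq_def
  proof (rule Bochner_Integration.integral_mono[OF True])
    show "integrable lebesgue (\<lambda>x. 2 * c1^2 * (cmod (f1 x))^2 + 2 * c2^2 * (cmod (f2 x))^2)"
      using L2_int[OF assms(1)] L2_int[OF assms(2)] by auto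
    fix x
    have "cmod (R x) \<le> c1 * cmod (f1 x) + c2 * cmod (f2 x)" by (rule assms(5))
    then have "(cmod (R x))^2 \<le> (c1 * cmod (f1 x) + c2 * cmod (f2 x))^2"
      by (simp add: power_mono)
    also have "\<dots> \<le> 2 * c1^2 * (cmod (f1 x))^2 + 2 * c2^2 * (cmod (f2 x))^2"
      using sq_sum_le[of "c1 * cmod (f1 x)" "c2 * cmod (f2 x)"] by (simp add: power_mult_distrib)
    finally show "(cmod (R x))^2 \<le> 2 * c1^2 * (cmod (f1 x))^2 + 2 * c2^2 * (cmod (f2 x))^2" .
  qed
  also have "\<dots> = 2 * c1^2 * nsq f1 + 2 * c2^2 * nsq f2"
    unfolding nsq_def using L2_int[OF assms(1)] L2_int[OF assms(2)] by simp
  finally show ?thesis .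
next
  case False
  then have "nsq R = 0" unfolding nsq_def by (simp add: not_integrable_integral_eq)
  then show ?thesis using nsq_nonneg[of f1] nsq_nonneg[of f2] by simp
qed

lemma nsq_bound1:
  assumes "f \<in> L2" "0 \<le> c" "\<And>x. cmod (R x) \<le> c * cmod (f x)"
  shows "nsq R \<le> c^2 * nsq f"
proof (cases "integrable lebesgue (\<lambda>x. (cmod (R x))^2)")
  case True
  have "nsq R \<le> integral\<^sup>L lebesgue (\<lambda>x. c^2 * (cmod (f x))^2)"
    unfolding nsq_def
  proof (rule Bochner_Integration.integral_mono[OF True])
    show "integrable lebesgue (\<lambda>x. c^2 * (cmod (f x))^2)"
      using L2_int[OF assms(1)] by auto
    fix x
    have "(cmod (R x))^2 \<le> (c * cmod (f x))^2"
      using assms(3)[of x] by (simp add: power_mono)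
    then show "(cmod (R x))^2 \<le> c^2 * (cmod (f x))^2" by (simp add: power_mult_distrib)
  qed
  also have "\<dots> = c^2 * nsq f"
    unfolding nsq_def using L2_int[OF assms(1)] by simp
  finally show ?thesis .
next
  case False
  then have "nsq R = 0" unfolding nsq_def by (simp add: not_integrable_integral_eq)
  then show ?thesis using nsq_nonneg[of f] by simp
qed

lemma nsq_scale: "nsq (\<lambda>x. c * f x) = (cmod c)^2 * nsq f"
  unfolding nsq_def by (simp add: norm_mult power_mult_distrib)

lemma nsq_cong_AE:
  assumes "f \<in> borel_measurable lebesgue" "h \<in> borel_measurable lebesgue" "AE x in lebesgue. f x = h x"
  shows "nsq f = nsq h"
  unfolding nsq_def
  by (rule integral_cong_AE) (use assms in auto)

lemma nsq_zero_AE: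
  assumes "f \<in> L2" "nsq f = 0"
  shows "AE x in lebesgue. f x = 0"
proof -
  have "AE x in lebesgue. (cmod (f x))^2 = 0"
    using integral_nonneg_eq_0_iff_AE[OF L2_int[OF assms(1)]] assms(2) unfolding nsq_def by auto
  then show ?thesis by auto
qed

lemma real_quad_CS:
  fixes a b I :: real
  assumes "\<And>s. 0 \<le> s^2 * a - 2 * s * I + b" "0 \<le> a" "0 \<le> b"
  shows "I \<le> sqrt a * sqrt b"
proof (cases "I \<le> 0")
  case True then show ?thesis using assms(2,3)
    by (meson order_trans real_sqrt_ge_zero mult_nonneg_nonneg)
next
  case False
  show ?thesis
  proof (cases "a = 0")
    case True
    have "0 \<le> ((b+1)/(2*I))^2 * a - 2 * ((b+1)/(2*I)) * I + b" by (rule assms(1))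
    with True False show ?thesis by (simp add: field_simps)
  next
    case a: False
    have "0 \<le> (I/a)^2 * a - 2 * (I/a) * I + b" by (rule assms(1))
    then have "0 \<le> (I^2/a - 2 * I^2/a + b)" using a by (simp add: field_simps power2_eq_square)
    then have "I^2/a \<le> b" by simp
    then have "I^2 \<le> a * b" using a assms(2) by (simp add: field_simps)
    then have "I \<le> sqrt (a * b)" by (rule real_le_rsqrt)
    then show ?thesis by (simp add: real_sqrt_mult)
  qed
qed

lemma L2_CS:
  assumes "f \<in> L2" "h \<in> L2"
  shows "integral\<^sup>L lebesgue (\<lambda>x. cmod (f x) * cmod (h x)) \<le> l2_norm f * l2_norm h"
proof -
  let ?I = "integral\<^sup>L lebesgue (\<lambda>x. cmod (f x) * cmod (h x))"
  have i1: "integrable lebesgue (\<lambda>x. cmod (f x) * cmod (h x))" by (rule integrable_L2_abs_prod[OF assms])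
  have i2: "integrable lebesgue (\<lambda>x. (cmod (f x))^2)" "integrable lebesgue (\<lambda>x. (cmod (h x))^2)"
    using L2_int assms by auto
  have "0 \<le> s^2 * nsq f - 2 * s * ?I + nsq h" for s
  proof -
    have "0 \<le> integral\<^sup>L lebesgue (\<lambda>x. (s * cmod (f x) - cmod (h x))^2)"
      by (rule Bochner_Integration.integral_nonneg_AE) auto
    also have "(\<lambda>x. (s * cmod (f x) - cmod (h x))^2) =
       (\<lambda>x. s^2 * (cmod (f x))^2 - 2 * s * (cmod (f x) * cmod (h x)) + (cmod (h x))^2)"
      by (rule ext) (simp add: power2_diff power_mult_distrib)
    also have "integral\<^sup>L lebesgue \<dots> = s^2 * nsq f - 2 * s * ?I + nsq h"
      unfolding nsq_def using i1 i2 by simp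
    finally show ?thesis .
  qed
  then have "?I \<le> sqrt (nsq f) * sqrt (nsq h)"
    by (rule real_quad_CS) (simp_all add: nsq_nonneg)
  then show ?thesis by (simp add: l2_norm_nsq)
qed

definition FT :: "fn3 \<Rightarrow> fn3" where
  "FT \<phi> y = integral\<^sup>L lebesgue (\<lambda>x. exp (- \<i> * complex_of_real (y \<bullet> x)) * \<phi> x)"

lemma norm_exp_mi[simp]: "cmod (exp (- \<i> * complex_of_real t)) = 1"
  by (simp add: norm_exp_eq_Re)

lemma inner_meas[measurable]: "(\<lambda>x::real^3. y \<bullet> x) \<in> borel_measurable lebesgue"
  by (rule measurable_compose[OF id_leb_borel]) simp

lemma prod_meas:
  assumes "\<phi> \<in> borel_measurable lebesgue"
  shows "(\<lambda>z::(real^3)\<times>(real^3). exp (- \<i> * complex_of_real (fst z \<bullet> snd z)) * \<phi> (snd z))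
           \<in> borel_measurable (lebesgue \<Otimes>\<^sub>M lebesgue)"
proof -
  have "(\<lambda>z::(real^3)\<times>(real^3). \<phi> (snd z)) \<in> borel_measurable (lebesgue \<Otimes>\<^sub>M lebesgue)"
    by (rule measurable_compose[OF measurable_snd assms])
  then show ?thesis using exp_inner_meas by measurable
qed

lemma FT_meas[measurable]:
  assumes "\<phi> \<in> borel_measurable lebesgue"
  shows "FT \<phi> \<in> borel_measurable lebesgue"
proof -
  have "(\<lambda>y. integral\<^sup>L lebesgue (\<lambda>x. exp (- \<i> * complex_of_real (y \<bullet> x)) * \<phi> x)) \<in> borel_measurable lebesgue"
    by (rule leb.borel_measurable_lebesgue_integral) (use prod_meas[OF assms] in \<open>simp add: case_prod_beta\<close>)
  then show ?thesis unfolding FT_def[abs_def] .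
qed

lemma FT_bound: "cmod (FT \<phi> y) \<le> integral\<^sup>L lebesgue (\<lambda>x. cmod (\<phi> x))"
proof -
  have "cmod (FT \<phi> y) \<le> integral\<^sup>L lebesgue (\<lambda>x. cmod (exp (- \<i> * complex_of_real (y \<bullet> x)) * \<phi> x))"
    unfolding FT_def by (rule Bochner_Integration.integral_norm_bound)
  then show ?thesis by (simp add: norm_mult)
qed


lemma integrable_exp_mult:
  fixes \<phi> :: fn3 and y :: "real^3"
  assumes "integrable lebesgue \<phi>"
  shows "integrable lebesgue (\<lambda>x. exp (- \<i> * complex_of_real (y \<bullet> x)) * \<phi> x)"
proof (rule Bochner_Integration.integrable_bound[OF assms])
  show "(\<lambda>x. exp (- \<i> * complex_of_real (y \<bullet> x)) * \<phi> x) \<in> borel_measurable lebesgue"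
  proof (rule borel_measurable_times)
    show "\<phi> \<in> borel_measurable lebesgue" using assms by auto
    show "(\<lambda>x. exp (- \<i> * complex_of_real (y \<bullet> x))) \<in> borel_measurable lebesgue"
      by (rule borel_measurable_continuous_on[OF _ inner_meas[of y]]) (intro continuous_intros)
  qed
  show "AE x in lebesgue. norm (exp (- \<i> * complex_of_real (y \<bullet> x)) * \<phi> x) \<le> norm (\<phi> x)"
    by (simp add: norm_mult)
qed

lemma FT_add:
  assumes "integrable lebesgue \<phi>" "integrable lebesgue \<psi>"
  shows "FT (\<lambda>x. \<phi> x + \<psi> x) y = FT \<phi> y + FT \<psi> y"
  unfolding FT_def
  using integrable_exp_mult[OF assms(1), of y] integrable_exp_mult[OF assms(2), of y]
  by (simp add: distrib_left)

lemma FT_diff: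
  assumes "integrable lebesgue \<phi>" "integrable lebesgue \<psi>"
  shows "FT (\<lambda>x. \<phi> x - \<psi> x) y = FT \<phi> y - FT \<psi> y"
  unfolding FT_def
  using integrable_exp_mult[OF assms(1), of y] integrable_exp_mult[OF assms(2), of y]
  by (simp add: right_diff_distrib)

lemma FT_scale: "FT (\<lambda>x. c * \<phi> x) y = c * FT \<phi> y"
  unfolding FT_def by (simp add: mult.left_commute)

lemma FT_real_conj: "FT (\<lambda>x. complex_of_real (w x)) (- y) = cnj (FT (\<lambda>x. complex_of_real (w x)) y)"
proof -
  have "\<And>x. exp (- \<i> * complex_of_real ((- y) \<bullet> x)) * complex_of_real (w x)
      = cnj (exp (- \<i> * complex_of_real (y \<bullet> x)) * complex_of_real (w x))"
    by (simp add: exp_cnj)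
  then have eq: "(\<lambda>x. exp (- \<i> * complex_of_real ((- y) \<bullet> x)) * complex_of_real (w x))
      = (\<lambda>x. cnj (exp (- \<i> * complex_of_real (y \<bullet> x)) * complex_of_real (w x)))"
    by (rule ext)
  show ?thesis unfolding FT_def eq by (rule Bochner_Integration.integral_cnj)
qed

lemma FT_fubini:
  assumes "integrable lebesgue \<phi>" "integrable lebesgue w"
  shows "integral\<^sup>L lebesgue (\<lambda>x. FT \<phi> x * w x) = integral\<^sup>L lebesgue (\<lambda>k. \<phi> k * FT w k)"
proof -
  define H where "H = (\<lambda>(x::real^3) (k::real^3). exp (- \<i> * complex_of_real (x \<bullet> k)) * \<phi> k * w x)"
  have mphi: "\<phi> \<in> borel_measurable lebesgue" "w \<in> borel_measurable lebesgue"
    using assms by auto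
  have m1: "(\<lambda>z::(real^3)\<times>(real^3). \<phi> (snd z)) \<in> borel_measurable (lebesgue \<Otimes>\<^sub>M lebesgue)"
    by (rule measurable_compose[OF measurable_snd mphi(1)])
  have m2: "(\<lambda>z::(real^3)\<times>(real^3). w (fst z)) \<in> borel_measurable (lebesgue \<Otimes>\<^sub>M lebesgue)"
    by (rule measurable_compose[OF measurable_fst mphi(2)])
  have Hm: "case_prod H \<in> borel_measurable (lebesgue \<Otimes>\<^sub>M lebesgue)"
    unfolding H_def using m1 m2 exp_inner_meas by (simp add: case_prod_beta) measurable
  have Hint: "integrable (lebesgue \<Otimes>\<^sub>M lebesgue) (case_prod H)"
  proof (rule leb2.Fubini_integrable[OF Hm])
    have "(\<lambda>x. \<integral>k. norm (case_prod H (x, k)) \<partial>lebesgue) = (\<lambda>x. cmod (w x) * integral\<^sup>L lebesgue (\<lambda>k. cmod (\<phi> k)))"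
      unfolding H_def by (simp add: norm_mult mult.commute)
    then show "integrable lebesgue (\<lambda>x. \<integral>k. norm (case_prod H (x, k)) \<partial>lebesgue)"
      using assms(2) by simp
    show "AE x in lebesgue. integrable lebesgue (\<lambda>k. case_prod H (x, k))"
    proof (rule AE_I2)
      fix x
      have "integrable lebesgue (\<lambda>k. (exp (- \<i> * complex_of_real (x \<bullet> k)) * \<phi> k) * w x)"
        using integrable_exp_mult[OF assms(1), of x] by simp
      then show "integrable lebesgue (\<lambda>k. case_prod H (x, k))" unfolding H_def by simp
    qed
  qed
  have "(\<integral>k. (\<integral>x. H x k \<partial>lebesgue) \<partial>lebesgue) = (\<integral>x. (\<integral>k. H x k \<partial>lebesgue) \<partial>lebesgue)"
    by (rule leb2.Fubini_integral[OF Hint])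
  moreover have "\<And>x. (\<integral>k. H x k \<partial>lebesgue) = FT \<phi> x * w x"
    unfolding H_def FT_def by simp
  moreover have "\<And>k. (\<integral>x. H x k \<partial>lebesgue) = \<phi> k * FT w k"
    unfolding H_def FT_def by (simp add: inner_commute mult.commute mult.left_commute)
  ultimately show ?thesis by simp
qed

lemma lebesgue_uminus:
  "distr lebesgue lebesgue uminus = (lebesgue :: (real^3) measure)"
    and uminus_leb_meas: "(uminus :: real^3 \<Rightarrow> _) \<in> lebesgue \<rightarrow>\<^sub>M lebesgue"
proof -
  have T: "(\<lambda>x::real^3. 0 + (\<Sum>j\<in>Basis. ((-1) * (x \<bullet> j)) *\<^sub>R j)) = uminus"
  proof (rule ext)
    fix x :: "real^3"
    have "(\<Sum>j\<in>Basis. ((-1) * (x \<bullet> j)) *\<^sub>R j) = - (\<Sum>j\<in>Basis. (x \<bullet> j) *\<^sub>R j)"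
      by (simp add: sum_negf[symmetric])
    then show "0 + (\<Sum>j\<in>Basis. ((-1) * (x \<bullet> j)) *\<^sub>R j) = - x"
      by (simp add: euclidean_representation)
  qed
  have "lebesgue = density (distr lebesgue lebesgue (\<lambda>x::real^3. 0 + (\<Sum>j\<in>Basis. ((\<lambda>_. -1) j * (x \<bullet> j)) *\<^sub>R j)))
      (\<lambda>_. (\<Prod>j\<in>(Basis::(real^3) set). \<bar>(\<lambda>_. -1::real) j\<bar>))"
    by (rule lebesgue_affine_euclidean) simp
  then show "distr lebesgue lebesgue uminus = (lebesgue :: (real^3) measure)"
    unfolding T by (simp add: density_1)
  have "(\<lambda>x::real^3. 0 + (\<Sum>j\<in>Basis. ((\<lambda>_. -1) j * (x \<bullet> j)) *\<^sub>R j)) \<in> lebesgue \<rightarrow>\<^sub>M lebesgue"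
    by (rule lebesgue_affine_measurable) simp
  then show "(uminus :: real^3 \<Rightarrow> _) \<in> lebesgue \<rightarrow>\<^sub>M lebesgue" unfolding T by simp
qed

lemma integral_reflect3:
  fixes f :: "real^3 \<Rightarrow> real"
  assumes "f \<in> borel_measurable lebesgue"
  shows "integral\<^sup>L lebesgue (\<lambda>x. f (- x)) = integral\<^sup>L lebesgue f"
proof -
  have "integral\<^sup>L lebesgue f = integral\<^sup>L (distr lebesgue lebesgue uminus) f"
    by (simp add: lebesgue_uminus)
  also have "\<dots> = integral\<^sup>L lebesgue (\<lambda>x. f (- x))"
    by (rule integral_distr[OF uminus_leb_meas assms])
  finally show ?thesis by simp
qed

definition aR :: "fn3 \<Rightarrow> fn3 \<Rightarrow> real^3 \<Rightarrow> real" where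
  "aR g \<alpha> x = 2 * Re (FT (\<lambda>k. g k * cnj (\<alpha> k)) x)"

lemma A_g_eq:
  assumes "g \<in> L2" "\<alpha> \<in> L2"
  shows "A_g g \<alpha> x = complex_of_real (aR g \<alpha> x)"
proof -
  define z where "z = (\<lambda>k. exp (- \<i> * complex_of_real (x \<bullet> k)) * (g k * cnj (\<alpha> k)))"
  have zi: "integrable lebesgue z"
    unfolding z_def by (rule integrable_exp_mult[OF integrable_L2_prod[OF assms(1) L2_cnj[OF assms(2)]]])
  have "\<And>k. g k * cnj (\<alpha> k) * exp (- \<i> * of_real (k \<bullet> x)) + cnj (g k) * \<alpha> k * exp (\<i> * of_real (k \<bullet> x))
      = z k + cnj (z k)"
    unfolding z_def by (simp add: exp_cnj inner_commute)
  then have "A_g g \<alpha> x = integral\<^sup>L lebesgue (\<lambda>k. z k + cnj (z k))"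
    unfolding A_g_def by simp
  also have "\<dots> = integral\<^sup>L lebesgue z + cnj (integral\<^sup>L lebesgue z)"
    using zi by (simp add: Bochner_Integration.integral_cnj)
  also have "\<dots> = complex_of_real (2 * Re (integral\<^sup>L lebesgue z))"
    by (simp add: complex_add_cnj)
  also have "integral\<^sup>L lebesgue z = FT (\<lambda>k. g k * cnj (\<alpha> k)) x"
    unfolding z_def FT_def ..
  finally show ?thesis unfolding aR_def .
qed

lemma aR_meas[measurable]:
  assumes "g \<in> borel_measurable lebesgue" "\<alpha> \<in> borel_measurable lebesgue"
  shows "aR g \<alpha> \<in> borel_measurable lebesgue"
proof -
  have [measurable]: "(\<lambda>k. g k * cnj (\<alpha> k)) \<in> borel_measurable lebesgue" using assms by measurable
  have "FT (\<lambda>k. g k * cnj (\<alpha> k)) \<in> borel_measurable lebesgue" by measurable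
  then show ?thesis unfolding aR_def[abs_def] by measurable
qed

lemma aR_bound:
  assumes "g \<in> L2" "\<alpha> \<in> L2"
  shows "\<bar>aR g \<alpha> x\<bar> \<le> 2 * l2_norm g * l2_norm \<alpha>"
proof -
  have "\<bar>Re (FT (\<lambda>k. g k * cnj (\<alpha> k)) x)\<bar> \<le> cmod (FT (\<lambda>k. g k * cnj (\<alpha> k)) x)"
    by (rule abs_Re_le_cmod)
  also have "\<dots> \<le> integral\<^sup>L lebesgue (\<lambda>k. cmod (g k * cnj (\<alpha> k)))"
    by (rule FT_bound)
  also have "\<dots> = integral\<^sup>L lebesgue (\<lambda>k. cmod (g k) * cmod (\<alpha> k))"
    by (simp add: norm_mult)
  also have "\<dots> \<le> l2_norm g * l2_norm \<alpha>" by (rule L2_CS[OF assms])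
  finally show ?thesis unfolding aR_def by simp
qed

lemma aR_lin:
  assumes "g \<in> L2" "\<alpha>1 \<in> L2" "\<alpha>2 \<in> L2"
  shows "aR g (\<lambda>k. complex_of_real a * \<alpha>1 k + \<alpha>2 k) x = a * aR g \<alpha>1 x + aR g \<alpha>2 x"
proof -
  have i1: "integrable lebesgue (\<lambda>k. g k * cnj (\<alpha>1 k))"
    by (rule integrable_L2_prod[OF assms(1) L2_cnj[OF assms(2)]])
  have i2: "integrable lebesgue (\<lambda>k. g k * cnj (\<alpha>2 k))"
    by (rule integrable_L2_prod[OF assms(1) L2_cnj[OF assms(3)]])
  have e: "(\<lambda>k. g k * cnj (complex_of_real a * \<alpha>1 k + \<alpha>2 k)) =
      (\<lambda>k. complex_of_real a * (g k * cnj (\<alpha>1 k)) + g k * cnj (\<alpha>2 k))"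
    by (rule ext) (simp add: algebra_simps)
  have "FT (\<lambda>k. g k * cnj (complex_of_real a * \<alpha>1 k + \<alpha>2 k)) x =
      complex_of_real a * FT (\<lambda>k. g k * cnj (\<alpha>1 k)) x + FT (\<lambda>k. g k * cnj (\<alpha>2 k)) x"
    unfolding e using i1 i2 by (simp add: FT_add FT_scale)
  then show ?thesis unfolding aR_def by simp
qed

definition wR :: "fn3 \<Rightarrow> fn3 \<Rightarrow> real^3 \<Rightarrow> real" where
  "wR u v x = 2 * Re (cnj (u x) * v x)"

lemma wR_meas[measurable]:
  assumes [measurable]: "u \<in> borel_measurable lebesgue" "v \<in> borel_measurable lebesgue"
  shows "wR u v \<in> borel_measurable lebesgue"
  unfolding wR_def[abs_def] by measurable

lemma wR_bound: "\<bar>wR u v x\<bar> \<le> 2 * (cmod (u x) * cmod (v x))"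
proof -
  have "\<bar>Re (cnj (u x) * v x)\<bar> \<le> cmod (cnj (u x) * v x)" by (rule abs_Re_le_cmod)
  then show ?thesis unfolding wR_def by (simp add: norm_mult)
qed

lemma wR_int:
  assumes "u \<in> L2" "v \<in> L2"
  shows "integrable lebesgue (wR u v)"
proof -
  have "integrable lebesgue (\<lambda>x. Re (cnj (u x) * v x))"
    by (rule integrable_bounded_linear[OF bounded_linear_Re integrable_L2_prod[OF L2_cnj[OF assms(1)] assms(2)]])
  then show ?thesis unfolding wR_def[abs_def] by (rule Bochner_Integration.integrable_mult_right)
qed

lemma wR_int_c:
  assumes "u \<in> L2" "v \<in> L2"
  shows "integrable lebesgue (\<lambda>x. complex_of_real (wR u v x))"
  by (rule integrable_of_real[OF wR_int[OF assms]])

lemma FTw_bound: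
  assumes "u \<in> L2" "v \<in> L2"
  shows "cmod (FT (\<lambda>x. complex_of_real (wR u v x)) k) \<le> 2 * l2_norm u * l2_norm v"
proof -
  have "cmod (FT (\<lambda>x. complex_of_real (wR u v x)) k) \<le> integral\<^sup>L lebesgue (\<lambda>x. cmod (complex_of_real (wR u v x)))"
    by (rule FT_bound)
  also have "\<dots> = integral\<^sup>L lebesgue (\<lambda>x. \<bar>wR u v x\<bar>)" by simp
  also have "\<dots> \<le> integral\<^sup>L lebesgue (\<lambda>x. 2 * (cmod (u x) * cmod (v x)))"
    by (rule Bochner_Integration.integral_mono)
       (use wR_int[OF assms] integrable_L2_abs_prod[OF assms] wR_bound in auto)
  also have "\<dots> \<le> 2 * (l2_norm u * l2_norm v)"
    using L2_CS[OF assms] by simp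
  finally show ?thesis by simp
qed

lemma sq_int:
  assumes "u \<in> L2"
  shows "integrable lebesgue (\<lambda>x. complex_of_real ((cmod (u x))^2))"
  by (rule integrable_of_real[OF L2_int[OF assms]])

lemma FTsq_bound:
  assumes "u \<in> L2"
  shows "cmod (FT (\<lambda>x. complex_of_real ((cmod (u x))^2)) k) \<le> nsq u"
proof -
  have "cmod (FT (\<lambda>x. complex_of_real ((cmod (u x))^2)) k) \<le> integral\<^sup>L lebesgue (\<lambda>x. cmod (complex_of_real ((cmod (u x))^2)))"
    by (rule FT_bound)
  then show ?thesis unfolding nsq_def by (simp only: norm_of_real abs_power2 abs_norm_cancel)
qed

lemma Fsq_FT: "Fsq u = FT (\<lambda>x. complex_of_real ((cmod (u x))^2))"
  unfolding Fsq_def[abs_def] FT_def[abs_def] ..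

lemma sq_expand: "(cmod (u x + v x))^2 = (cmod (u x))^2 + wR u v x + (cmod (v x))^2"
  unfolding wR_def cmod_power2 by (simp add: power2_sum algebra_simps)

lemma iexp_1: "cmod (exp (- \<i> * complex_of_real t) - 1) \<le> \<bar>t\<bar>"
  using iexp_approx1[of "-t" 0] by simp

lemma iexp_2: "cmod (exp (- \<i> * complex_of_real t) - 1 + \<i> * complex_of_real t) \<le> t^2 / 2"
proof -
  have "cmod (iexp (-t) - (\<Sum>k\<le>1. (\<i> * complex_of_real (-t)) ^ k / fact k)) \<le> \<bar>-t\<bar> ^ Suc 1 / fact (Suc 1)"
    by (rule iexp_approx1)
  then show ?thesis by (simp add: algebra_simps power2_eq_square)
qed

lemma L2_bound2:
  assumes "f1 \<in> L2" "f2 \<in> L2" "h \<in> borel_measurable lebesgue"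
    and "\<And>x. cmod (h x) \<le> c1 * cmod (f1 x) + c2 * cmod (f2 x)"
  shows "h \<in> L2"
proof (rule L2I[OF assms(3)])
  show "integrable lebesgue (\<lambda>x. (cmod (h x))^2)"
  proof (rule Bochner_Integration.integrable_bound[OF Bochner_Integration.integrable_add[OF
        integrable_mult_right[OF L2_int[OF assms(1)], of "2*c1^2"] integrable_mult_right[OF L2_int[OF assms(2)], of "2*c2^2"]]])
    show "(\<lambda>x. (cmod (h x))\<^sup>2) \<in> borel_measurable lebesgue" using assms(3) by measurable
    show "AE x in lebesgue. norm ((cmod (h x))\<^sup>2) \<le> norm (2*c1^2 * (cmod (f1 x))\<^sup>2 + 2*c2^2 * (cmod (f2 x))\<^sup>2)"
    proof (rule AE_I2)
      fix x
      have "0 \<le> cmod (h x)" by simp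
      then have "(cmod (h x))^2 \<le> (c1 * cmod (f1 x) + c2 * cmod (f2 x))^2"
        using assms(4)[of x] by (simp add: power_mono)
      also have "\<dots> \<le> 2*c1^2 * (cmod (f1 x))\<^sup>2 + 2*c2^2 * (cmod (f2 x))\<^sup>2"
        using sq_sum_le[of "c1 * cmod (f1 x)" "c2 * cmod (f2 x)"] by (simp add: power_mult_distrib)
      finally show "norm ((cmod (h x))\<^sup>2) \<le> norm (2*c1^2 * (cmod (f1 x))\<^sup>2 + 2*c2^2 * (cmod (f2 x))\<^sup>2)"
        by simp
    qed
  qed
qed

lemma pnorm_nsq: "pnorm p = sqrt (nsq (fst p) + nsq (snd p))"
  unfolding pnorm_def l2_norm_sq ..

lemma pnorm_ge: "l2_norm (fst p) \<le> pnorm p" "l2_norm (snd p) \<le> pnorm p"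
  unfolding pnorm_def
  by (rule real_le_rsqrt, simp)+

lemma pnorm_nonneg: "0 \<le> pnorm p"
  unfolding pnorm_def by simp

lemma aR_add:
  assumes "g \<in> L2" "\<alpha>1 \<in> L2" "\<alpha>2 \<in> L2"
  shows "aR g (\<lambda>k. \<alpha>1 k + \<alpha>2 k) x = aR g \<alpha>1 x + aR g \<alpha>2 x"
  using aR_lin[OF assms, of 1 x] by simp

lemma E_meas_gen:
  assumes "g \<in> L2" "\<alpha> \<in> L2"
  shows "(\<lambda>x. exp (- \<i> * complex_of_real \<theta> * complex_of_real (aR g \<alpha> x))) \<in> borel_measurable lebesgue"
proof -
  have [measurable]: "aR g \<alpha> \<in> borel_measurable lebesgue"
    by (rule aR_meas[OF L2_meas[OF assms(1)] L2_meas[OF assms(2)]])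
  show ?thesis by measurable
qed

lemma D_in_L2P:
  assumes "g \<in> L2" "q \<in> L2P"
  shows "D_g g \<theta> q \<in> L2P"
proof -
  obtain u' \<alpha>' where q: "q = (u', \<alpha>')" "u' \<in> L2" "\<alpha>' \<in> L2" using assms(2) unfolding L2P_def by auto
  have e: "D_g g \<theta> q = (\<lambda>x. exp (- \<i> * complex_of_real \<theta> * complex_of_real (aR g \<alpha>' x)) * u' x,
      \<lambda>k. \<alpha>' k - \<i> * complex_of_real \<theta> * g k * FT (\<lambda>x. complex_of_real ((cmod (u' x))^2)) k)"
    unfolding D_g_def q(1) by (simp add: A_g_eq[OF assms(1) q(3)] Fsq_FT mult.commute)
  have [measurable]: "u' \<in> borel_measurable lebesgue" "\<alpha>' \<in> borel_measurable lebesgue" "g \<in> borel_measurable lebesgue"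
    using q assms L2_meas by auto
  have "(\<lambda>x. exp (- \<i> * complex_of_real \<theta> * complex_of_real (aR g \<alpha>' x)) * u' x) \<in> L2"
    by (rule L2_mult_bounded[OF q(2) E_meas_gen[OF assms(1) q(3)], where B=1])
       (simp add: norm_exp_eq_Re)
  moreover have "(\<lambda>k. \<alpha>' k - \<i> * complex_of_real \<theta> * g k * FT (\<lambda>x. complex_of_real ((cmod (u' x))^2)) k) \<in> L2"
  proof (rule L2_bound2[OF q(3) assms(1), of _ 1 "\<bar>\<theta>\<bar> * nsq u'"])
    show "(\<lambda>k. \<alpha>' k - \<i> * complex_of_real \<theta> * g k * FT (\<lambda>x. complex_of_real ((cmod (u' x))^2)) k) \<in> borel_measurable lebesgue"
      by measurable
    fix k
    have "cmod (\<alpha>' k - \<i> * complex_of_real \<theta> * g k * FT (\<lambda>x. complex_of_real ((cmod (u' x))^2)) k)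
        \<le> cmod (\<alpha>' k) + cmod (\<i> * complex_of_real \<theta> * g k * FT (\<lambda>x. complex_of_real ((cmod (u' x))^2)) k)"
      by (rule norm_triangle_ineq4)
    also have "cmod (\<i> * complex_of_real \<theta> * g k * FT (\<lambda>x. complex_of_real ((cmod (u' x))^2)) k)
        = \<bar>\<theta>\<bar> * cmod (FT (\<lambda>x. complex_of_real ((cmod (u' x))^2)) k) * cmod (g k)"
      by (simp add: norm_mult)
    also have "\<dots> \<le> \<bar>\<theta>\<bar> * nsq u' * cmod (g k)"
      by (intro mult_right_mono mult_left_mono FTsq_bound q(2)) auto
    finally show "cmod (\<alpha>' k - \<i> * complex_of_real \<theta> * g k * FT (\<lambda>x. complex_of_real ((cmod (u' x))^2)) k)
        \<le> 1 * cmod (\<alpha>' k) + \<bar>\<theta>\<bar> * nsq u' * cmod (g k)" by simp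
  qed
  ultimately show ?thesis unfolding e L2P_def by simp
qed

locale pctx =
  fixes g :: fn3 and \<theta> :: real and u :: fn3 and \<alpha> :: fn3
  assumes gL: "g \<in> L2" and uL: "u \<in> L2" and aL: "\<alpha> \<in> L2"
begin

definition E :: "real^3 \<Rightarrow> complex" where
  "E x = exp (- \<i> * complex_of_real \<theta> * complex_of_real (aR g \<alpha> x))"

lemma E_norm[simp]: "cmod (E x) = 1"
  unfolding E_def by (simp add: norm_exp_eq_Re)

lemma E_meas[measurable]: "E \<in> borel_measurable lebesgue"
  unfolding E_def[abs_def] by (rule E_meas_gen[OF gL aL])

lemma g_meas[measurable]: "g \<in> borel_measurable lebesgue" using gL L2_meas by auto
lemma u_meas[measurable]: "u \<in> borel_measurable lebesgue" using uL L2_meas by auto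

definition Lop :: "fn3pair \<Rightarrow> fn3pair" where
  "Lop h = (\<lambda>x. fst h x * E x - \<i> * complex_of_real \<theta> * complex_of_real (aR g (snd h) x) * u x * E x,
            \<lambda>k. snd h k - \<i> * complex_of_real \<theta> * g k * FT (\<lambda>x. complex_of_real (wR u (fst h) x)) k)"

lemma Lop_fst_bound:
  assumes "\<beta> \<in> L2"
  shows "cmod (fst (Lop (v, \<beta>)) x) \<le> 1 * cmod (v x) + (\<bar>\<theta>\<bar> * (2 * l2_norm g * l2_norm \<beta>)) * cmod (u x)"
proof -
  have "cmod (fst (Lop (v, \<beta>)) x) \<le> cmod (v x * E x) + cmod (\<i> * complex_of_real \<theta> * complex_of_real (aR g \<beta> x) * u x * E x)"
    unfolding Lop_def by (simp add: norm_triangle_ineq4)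
  also have "cmod (\<i> * complex_of_real \<theta> * complex_of_real (aR g \<beta> x) * u x * E x) = \<bar>\<theta>\<bar> * \<bar>aR g \<beta> x\<bar> * cmod (u x)"
    by (simp add: norm_mult)
  also have "\<dots> \<le> \<bar>\<theta>\<bar> * (2 * l2_norm g * l2_norm \<beta>) * cmod (u x)"
    by (intro mult_right_mono mult_left_mono aR_bound gL assms) auto
  finally show ?thesis by (simp add: norm_mult)
qed

lemma Lop_snd_bound:
  assumes "v \<in> L2"
  shows "cmod (snd (Lop (v, \<beta>)) k) \<le> 1 * cmod (\<beta> k) + (\<bar>\<theta>\<bar> * (2 * l2_norm u * l2_norm v)) * cmod (g k)"
proof -
  have "cmod (snd (Lop (v, \<beta>)) k) \<le> cmod (\<beta> k) + cmod (\<i> * complex_of_real \<theta> * g k * FT (\<lambda>x. complex_of_real (wR u v x)) k)"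
    unfolding Lop_def by (simp add: norm_triangle_ineq4)
  also have "cmod (\<i> * complex_of_real \<theta> * g k * FT (\<lambda>x. complex_of_real (wR u v x)) k)
      = \<bar>\<theta>\<bar> * cmod (FT (\<lambda>x. complex_of_real (wR u v x)) k) * cmod (g k)"
    by (simp add: norm_mult)
  also have "\<dots> \<le> \<bar>\<theta>\<bar> * (2 * l2_norm u * l2_norm v) * cmod (g k)"
    by (intro mult_right_mono mult_left_mono FTw_bound uL assms) auto
  finally show ?thesis by simp
qed

lemma Lop_L2P:
  assumes "h \<in> L2P"
  shows "Lop h \<in> L2P"
proof -
  obtain v \<beta> where h: "h = (v, \<beta>)" "v \<in> L2" "\<beta> \<in> L2" using assms unfolding L2P_def by auto
  have [measurable]: "v \<in> borel_measurable lebesgue" "\<beta> \<in> borel_measurable lebesgue"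
    using h L2_meas by auto
  have [measurable]: "aR g \<beta> \<in> borel_measurable lebesgue" by (rule aR_meas) measurable
  have [measurable]: "FT (\<lambda>x. complex_of_real (wR u v x)) \<in> borel_measurable lebesgue"
    by (rule FT_meas) measurable
  have "fst (Lop (v, \<beta>)) \<in> L2"
    by (rule L2_bound2[where h="fst (Lop (v, \<beta>))", OF h(2) uL _ Lop_fst_bound[OF h(3), of v]]) (simp add: Lop_def)
  moreover have "snd (Lop (v, \<beta>)) \<in> L2"
    by (rule L2_bound2[where h="snd (Lop (v, \<beta>))", OF h(3) gL _ Lop_snd_bound[OF h(2), of \<beta>]]) (simp add: Lop_def)
  ultimately show ?thesis unfolding h L2P_def by (simp add: mem_Times_iff)
qed

lemma wR_lin: "wR u (\<lambda>x. complex_of_real a * v1 x + v2 x) x = a * wR u v1 x + wR u v2 x"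
  unfolding wR_def by (simp add: algebra_simps)

lemma Lop_lin:
  assumes "h1 \<in> L2P" "h2 \<in> L2P"
  shows "Lop (padd (pscale a h1) h2) = padd (pscale a (Lop h1)) (Lop h2)"
proof -
  obtain v1 \<beta>1 where h1: "h1 = (v1, \<beta>1)" "v1 \<in> L2" "\<beta>1 \<in> L2" using assms unfolding L2P_def by auto
  obtain v2 \<beta>2 where h2: "h2 = (v2, \<beta>2)" "v2 \<in> L2" "\<beta>2 \<in> L2" using assms unfolding L2P_def by auto
  have aa: "aR g (\<lambda>k. complex_of_real a * \<beta>1 k + \<beta>2 k) x = a * aR g \<beta>1 x + aR g \<beta>2 x" for x
    by (rule aR_lin[OF gL h1(3) h2(3)])
  have i1: "integrable lebesgue (\<lambda>x. complex_of_real (wR u v1 x))" by (rule wR_int_c[OF uL h1(2)])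
  have i2: "integrable lebesgue (\<lambda>x. complex_of_real (wR u v2 x))" by (rule wR_int_c[OF uL h2(2)])
  have ff: "FT (\<lambda>x. complex_of_real (wR u (\<lambda>x. complex_of_real a * v1 x + v2 x) x)) k
      = complex_of_real a * FT (\<lambda>x. complex_of_real (wR u v1 x)) k + FT (\<lambda>x. complex_of_real (wR u v2 x)) k" for k
  proof -
    have "(\<lambda>x. complex_of_real (wR u (\<lambda>x. complex_of_real a * v1 x + v2 x) x))
        = (\<lambda>x. complex_of_real a * complex_of_real (wR u v1 x) + complex_of_real (wR u v2 x))"
      by (rule ext) (simp add: wR_lin)
    then show ?thesis using i1 i2 by (simp add: FT_add FT_scale)
  qed
  show ?thesis
    unfolding h1(1) h2(1) Lop_def padd_def pscale_def
    by (simp only: prod.sel aa ff) (simp add: algebra_simps)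
qed

definition C0 :: real where "C0 = 4 + 16 * \<theta>^2 * (l2_norm g)^2 * (l2_norm u)^2"

lemma Lop_bounded:
  assumes "h \<in> L2P"
  shows "pnorm (Lop h) \<le> sqrt C0 * pnorm h"
proof -
  obtain v \<beta> where h: "h = (v, \<beta>)" "v \<in> L2" "\<beta> \<in> L2" using assms unfolding L2P_def by auto
  define N where "N = pnorm h"
  define G where "G = l2_norm g"
  define U where "U = l2_norm u"
  have a: "l2_norm v \<le> N" "0 \<le> l2_norm v" unfolding N_def h(1) using pnorm_ge[of "(v,\<beta>)"] l2_norm_nonneg by auto
  have b: "l2_norm \<beta> \<le> N" "0 \<le> l2_norm \<beta>" unfolding N_def h(1) using pnorm_ge[of "(v,\<beta>)"] l2_norm_nonneg by auto
  have GU: "0 \<le> G" "0 \<le> U" unfolding G_def U_def by (simp_all add: l2_norm_nonneg)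
  have "nsq (fst (Lop (v, \<beta>))) \<le> 2 * 1^2 * nsq v + 2 * (\<bar>\<theta>\<bar> * (2 * G * l2_norm \<beta>))^2 * nsq u"
    unfolding G_def
    by (rule nsq_bound2[where R="fst (Lop (v, \<beta>))", OF h(2) uL _ _ Lop_fst_bound[OF h(3), of v]]) (simp_all add: l2_norm_nonneg)
  also have "\<dots> = 2 * (l2_norm v)^2 + 8 * \<theta>^2 * G^2 * U^2 * (l2_norm \<beta>)^2"
    unfolding U_def l2_norm_sq[symmetric] by (simp add: power_mult_distrib)
  also have "\<dots> \<le> 2 * N^2 + 8 * \<theta>^2 * G^2 * U^2 * N^2"
    using a b by (intro add_mono mult_left_mono power_mono) auto
  finally have f1: "nsq (fst (Lop (v, \<beta>))) \<le> 2 * N^2 + 8 * \<theta>^2 * G^2 * U^2 * N^2" .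
  have "nsq (snd (Lop (v, \<beta>))) \<le> 2 * 1^2 * nsq \<beta> + 2 * (\<bar>\<theta>\<bar> * (2 * U * l2_norm v))^2 * nsq g"
    unfolding U_def
    by (rule nsq_bound2[where R="snd (Lop (v, \<beta>))", OF h(3) gL _ _ Lop_snd_bound[OF h(2), of \<beta>]]) (simp_all add: l2_norm_nonneg)
  also have "\<dots> = 2 * (l2_norm \<beta>)^2 + 8 * \<theta>^2 * G^2 * U^2 * (l2_norm v)^2"
    unfolding G_def l2_norm_sq[symmetric] by (simp add: power_mult_distrib)
  also have "\<dots> \<le> 2 * N^2 + 8 * \<theta>^2 * G^2 * U^2 * N^2"
    using a b by (intro add_mono mult_left_mono power_mono) auto
  finally have f2: "nsq (snd (Lop (v, \<beta>))) \<le> 2 * N^2 + 8 * \<theta>^2 * G^2 * U^2 * N^2" .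
  have "pnorm (Lop h) = sqrt (nsq (fst (Lop (v, \<beta>))) + nsq (snd (Lop (v, \<beta>))))"
    unfolding pnorm_nsq h(1) ..
  also have "\<dots> \<le> sqrt (C0 * N^2)"
    using f1 f2 unfolding C0_def G_def U_def by (intro real_sqrt_le_mono) (simp add: algebra_simps)
  also have "\<dots> = sqrt C0 * N"
    using pnorm_nonneg[of h] unfolding N_def by (simp add: real_sqrt_mult)
  finally show ?thesis unfolding N_def .
qed

end

lemma exp_split_ring:
  fixes U V Ee e T :: complex
  shows "(U + V) * (Ee * e) - U * Ee - (V * Ee - \<i> * T * U * Ee) = Ee * (U * (e - 1 + \<i> * T) + V * (e - 1))"
  by (simp add: algebra_simps)

context pctx begin

definition K :: real where
  "K = 8 * \<theta>^4 * (l2_norm g)^4 * (l2_norm u)^2 + 9 * \<theta>^2 * (l2_norm g)^2"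

lemma K_nonneg: "0 \<le> K"
  unfolding K_def by simp

lemma rem_fst:
  assumes "v \<in> L2" "\<beta> \<in> L2"
  shows "fst (pdiff (pdiff (D_g g \<theta> (padd (u, \<alpha>) (v, \<beta>))) (D_g g \<theta> (u, \<alpha>))) (Lop (v, \<beta>))) x
     = E x * (u x * (exp (- \<i> * complex_of_real (\<theta> * aR g \<beta> x)) - 1 + \<i> * complex_of_real (\<theta> * aR g \<beta> x))
              + v x * (exp (- \<i> * complex_of_real (\<theta> * aR g \<beta> x)) - 1))"
proof -
  have Aab: "A_g g (\<lambda>x. \<alpha> x + \<beta> x) x = complex_of_real (aR g \<alpha> x + aR g \<beta> x)"
    using A_g_eq[OF gL L2_add[OF aL assms(2)]] aR_add[OF gL aL assms(2)] by simp
  have Aa: "A_g g \<alpha> x = complex_of_real (aR g \<alpha> x)" by (rule A_g_eq[OF gL aL])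
  have ex: "exp (- \<i> * complex_of_real \<theta> * complex_of_real (aR g \<alpha> x + aR g \<beta> x))
      = E x * exp (- \<i> * complex_of_real (\<theta> * aR g \<beta> x))"
    unfolding E_def exp_add[symmetric] by (simp add: algebra_simps)
  show ?thesis
    unfolding pdiff_def padd_def D_g_def Lop_def
    apply (simp only: prod.sel Aab Aa ex)
    apply (fold E_def)
    using exp_split_ring[of "u x" "v x" "E x" "exp (- \<i> * complex_of_real (\<theta> * aR g \<beta> x))" "complex_of_real (\<theta> * aR g \<beta> x)"]
    by (simp add: mult.assoc)
qed

lemma rem_snd:
  assumes "v \<in> L2" "\<beta> \<in> L2"
  shows "snd (pdiff (pdiff (D_g g \<theta> (padd (u, \<alpha>) (v, \<beta>))) (D_g g \<theta> (u, \<alpha>))) (Lop (v, \<beta>))) k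
     = - \<i> * complex_of_real \<theta> * g k * FT (\<lambda>x. complex_of_real ((cmod (v x))^2)) k"
proof -
  have i1: "integrable lebesgue (\<lambda>x. complex_of_real ((cmod (u x))^2))" by (rule sq_int[OF uL])
  have i2: "integrable lebesgue (\<lambda>x. complex_of_real (wR u v x))" by (rule wR_int_c[OF uL assms(1)])
  have i3: "integrable lebesgue (\<lambda>x. complex_of_real ((cmod (v x))^2))" by (rule sq_int[OF assms(1)])
  have "Fsq (\<lambda>x. u x + v x) k = FT (\<lambda>x. (complex_of_real ((cmod (u x))^2) + complex_of_real (wR u v x))
        + complex_of_real ((cmod (v x))^2)) k"
    unfolding Fsq_FT by (simp add: sq_expand del: of_real_power)
  also have "\<dots> = Fsq u k + FT (\<lambda>x. complex_of_real (wR u v x)) k + FT (\<lambda>x. complex_of_real ((cmod (v x))^2)) k"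
    unfolding Fsq_FT using i1 i2 i3 by (simp add: FT_add del: of_real_power)
  finally have F: "Fsq (\<lambda>x. u x + v x) k = Fsq u k + FT (\<lambda>x. complex_of_real (wR u v x)) k
      + FT (\<lambda>x. complex_of_real ((cmod (v x))^2)) k" .
  show ?thesis
    unfolding pdiff_def padd_def D_g_def Lop_def
    apply (simp only: prod.sel F)
    by (simp add: algebra_simps)
qed

end

lemma arith_K:
  fixes a b N G U \<theta> :: real
  assumes "0 \<le> a" "a \<le> N" "0 \<le> b" "b \<le> N" "0 \<le> G" "0 \<le> U"
  shows "2*(\<theta>^2*(2*G*b)^2/2)^2*U^2 + 2*(\<bar>\<theta>\<bar>*(2*G*b))^2*a^2 + (\<bar>\<theta>\<bar>*a^2)^2*G^2
      \<le> (8 * \<theta>^4 * G^4 * U^2 + 9 * \<theta>^2 * G^2) * N^4"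
proof -
  have e: "2*(\<theta>^2*(2*G*b)^2/2)^2*U^2 + 2*(\<bar>\<theta>\<bar>*(2*G*b))^2*a^2 + (\<bar>\<theta>\<bar>*a^2)^2*G^2
      = (8 * \<theta>^4 * G^4 * U^2) * b^4 + (8 * \<theta>^2 * G^2) * (a^2 * b^2) + (\<theta>^2 * G^2) * a^4"
    by (simp add: power_mult_distrib power2_abs algebra_simps power4_eq_xxxx power2_eq_square)
  have b4: "b^4 \<le> N^4" using assms by (intro power_mono) auto
  have a4: "a^4 \<le> N^4" using assms by (intro power_mono) auto
  have ab: "a^2 * b^2 \<le> N^4"
  proof -
    have "a^2 \<le> N^2" "b^2 \<le> N^2" using assms by (intro power_mono; simp)+
    then have "a^2 * b^2 \<le> N^2 * N^2" by (intro mult_mono) auto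
    then show ?thesis by (simp add: power4_eq_xxxx power2_eq_square mult.assoc)
  qed
  have "(8 * \<theta>^4 * G^4 * U^2) * b^4 + (8 * \<theta>^2 * G^2) * (a^2 * b^2) + (\<theta>^2 * G^2) * a^4
      \<le> (8 * \<theta>^4 * G^4 * U^2) * N^4 + (8 * \<theta>^2 * G^2) * N^4 + (\<theta>^2 * G^2) * N^4"
    using b4 a4 ab by (intro add_mono mult_left_mono) auto
  then show ?thesis unfolding e by (simp add: algebra_simps)
qed

context pctx begin

lemma rem_bound:
  assumes "h \<in> L2P"
  shows "pnorm (pdiff (pdiff (D_g g \<theta> (padd (u, \<alpha>) h)) (D_g g \<theta> (u, \<alpha>))) (Lop h)) \<le> sqrt K * (pnorm h)^2"
proof -
  obtain v \<beta> where h: "h = (v, \<beta>)" "v \<in> L2" "\<beta> \<in> L2" using assms unfolding L2P_def by auto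
  define R where "R = pdiff (pdiff (D_g g \<theta> (padd (u, \<alpha>) (v, \<beta>))) (D_g g \<theta> (u, \<alpha>))) (Lop (v, \<beta>))"
  define N where "N = pnorm h"
  define G where "G = l2_norm g"
  define U where "U = l2_norm u"
  define a where "a = l2_norm v"
  define b where "b = l2_norm \<beta>"
  have ab: "a \<le> N" "0 \<le> a" "b \<le> N" "0 \<le> b" unfolding N_def a_def b_def h(1)
    using pnorm_ge[of "(v,\<beta>)"] l2_norm_nonneg by auto
  have GU: "0 \<le> G" "0 \<le> U" unfolding G_def U_def by (simp_all add: l2_norm_nonneg)
  have fb: "cmod (fst R x) \<le> (\<theta>^2*(2*G*b)^2/2) * cmod (u x) + (\<bar>\<theta>\<bar>*(2*G*b)) * cmod (v x)" for x
  proof -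
    define t where "t = \<theta> * aR g \<beta> x"
    have tb: "\<bar>t\<bar> \<le> \<bar>\<theta>\<bar>*(2*G*b)"
      unfolding t_def G_def b_def abs_mult by (intro mult_left_mono aR_bound gL h(3)) auto
    have tb2: "t^2/2 \<le> \<theta>^2*(2*G*b)^2/2"
    proof -
      have "\<bar>t\<bar>^2 \<le> (\<bar>\<theta>\<bar>*(2*G*b))^2" using tb by (intro power_mono) auto
      then show ?thesis by (simp add: power_mult_distrib algebra_simps)
    qed
    have "cmod (fst R x) = cmod (u x * (exp (- \<i> * complex_of_real t) - 1 + \<i> * complex_of_real t)
              + v x * (exp (- \<i> * complex_of_real t) - 1))"
      unfolding R_def rem_fst[OF h(2,3)] t_def by (simp add: norm_mult)
    also have "\<dots> \<le> cmod (u x) * cmod (exp (- \<i> * complex_of_real t) - 1 + \<i> * complex_of_real t)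
              + cmod (v x) * cmod (exp (- \<i> * complex_of_real t) - 1)"
      by (rule order_trans[OF norm_triangle_ineq]) (simp add: norm_mult)
    also have "\<dots> \<le> cmod (u x) * (\<theta>^2*(2*G*b)^2/2) + cmod (v x) * (\<bar>\<theta>\<bar>*(2*G*b))"
      using iexp_1[of t] iexp_2[of t] tb tb2
      by (intro add_mono mult_left_mono) auto
    finally show ?thesis by (simp add: mult.commute)
  qed
  have sb: "cmod (snd R k) \<le> (\<bar>\<theta>\<bar> * a^2) * cmod (g k)" for k
  proof -
    have "cmod (snd R k) = \<bar>\<theta>\<bar> * cmod (FT (\<lambda>x. complex_of_real ((cmod (v x))^2)) k) * cmod (g k)"
      unfolding R_def rem_snd[OF h(2,3)] by (simp add: norm_mult)
    also have "\<dots> \<le> \<bar>\<theta>\<bar> * a^2 * cmod (g k)"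
      unfolding a_def l2_norm_sq by (intro mult_left_mono mult_right_mono FTsq_bound h(2)) auto
    finally show ?thesis .
  qed
  have n1: "nsq (fst R) \<le> 2*(\<theta>^2*(2*G*b)^2/2)^2*U^2 + 2*(\<bar>\<theta>\<bar>*(2*G*b))^2*a^2"
    using nsq_bound2[where R="fst R", OF uL h(2) _ _ fb] GU ab
    unfolding U_def a_def l2_norm_sq by simp
  have n2: "nsq (snd R) \<le> (\<bar>\<theta>\<bar>*a^2)^2*G^2"
    using nsq_bound1[where R="snd R", OF gL _ sb] unfolding G_def l2_norm_sq by simp
  have "pnorm R = sqrt (nsq (fst R) + nsq (snd R))" by (rule pnorm_nsq)
  also have "\<dots> \<le> sqrt (K * N^4)"
    using n1 n2 arith_K[OF ab(2,1,4,3) GU, of \<theta>] unfolding K_def G_def U_def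
    by (intro real_sqrt_le_mono) simp
  also have "\<dots> = sqrt K * N^2"
  proof -
    have e: "N^4 = (N^2)^2" by simp
    show ?thesis by (simp only: e real_sqrt_mult real_sqrt_abs abs_power2)
  qed
  finally show ?thesis unfolding R_def N_def h(1) .
qed

lemma pae_eq_refl: "pae_eq p p"
  unfolding pae_eq_def by simp

lemma frechet_Lop: "frechet_deriv_at (D_g g \<theta>) (u, \<alpha>) Lop"
  unfolding frechet_deriv_at_def
proof (intro conjI ballI allI impI)
  show "\<And>h. h \<in> L2P \<Longrightarrow> Lop h \<in> L2P" by (rule Lop_L2P)
  show "\<And>a h1 h2. h1 \<in> L2P \<Longrightarrow> h2 \<in> L2P \<Longrightarrow>
      pae_eq (Lop (padd (pscale a h1) h2)) (padd (pscale a (Lop h1)) (Lop h2))"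
    by (simp add: Lop_lin pae_eq_refl)
  show "\<exists>C. \<forall>h\<in>L2P. pnorm (Lop h) \<le> C * pnorm h"
    using Lop_bounded by blast
  fix \<epsilon> :: real assume \<epsilon>: "0 < \<epsilon>"
  define \<delta> where "\<delta> = \<epsilon> / (sqrt K + 1)"
  have sK: "0 \<le> sqrt K" using K_nonneg by simp
  have sK1: "0 < sqrt K + 1" using sK by linarith
  have d: "0 < \<delta>" unfolding \<delta>_def using \<epsilon> sK1 by (rule divide_pos_pos)
  show "\<exists>\<delta>>0. \<forall>h\<in>L2P. pnorm h < \<delta> \<longrightarrow>
      pnorm (pdiff (pdiff (D_g g \<theta> (padd (u, \<alpha>) h)) (D_g g \<theta> (u, \<alpha>))) (Lop h)) \<le> \<epsilon> * pnorm h"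
  proof (intro exI[of _ \<delta>] conjI ballI impI d)
    fix h assume h: "h \<in> L2P" "pnorm h < \<delta>"
    have N0: "0 \<le> pnorm h" by (rule pnorm_nonneg)
    have "sqrt K * pnorm h \<le> sqrt K * \<delta>" using h(2) sK by (intro mult_left_mono) auto
    also have "\<dots> \<le> \<epsilon>"
    proof -
      have q: "sqrt K / (sqrt K + 1) \<le> 1" using sK1 by (simp add: divide_le_eq_1)
      have "sqrt K * \<delta> = \<epsilon> * (sqrt K / (sqrt K + 1))" unfolding \<delta>_def by simp
      also have "\<dots> \<le> \<epsilon> * 1" using q \<epsilon> by (intro mult_left_mono) auto
      finally show ?thesis by simp
    qed
    finally have s: "sqrt K * pnorm h \<le> \<epsilon>" .
    have "pnorm (pdiff (pdiff (D_g g \<theta> (padd (u, \<alpha>) h)) (D_g g \<theta> (u, \<alpha>))) (Lop h)) \<le> sqrt K * (pnorm h)^2"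
      by (rule rem_bound[OF h(1)])
    also have "\<dots> = (sqrt K * pnorm h) * pnorm h" by (simp add: power2_eq_square)
    also have "\<dots> \<le> \<epsilon> * pnorm h" using s N0 by (intro mult_right_mono) auto
    finally show "pnorm (pdiff (pdiff (D_g g \<theta> (padd (u, \<alpha>) h)) (D_g g \<theta> (u, \<alpha>))) (Lop h)) \<le> \<epsilon> * pnorm h" .
  qed
qed

end

definition Z :: fn3pair where "Z = (\<lambda>x. 0, \<lambda>x. 0)"

lemma Z_L2P: "Z \<in> L2P" unfolding Z_def L2P_def using L2_zero by auto

lemma pscale_L2P: "h \<in> L2P \<Longrightarrow> pscale t h \<in> L2P"
  unfolding pscale_def L2P_def using L2_cmult by (auto simp: mem_Times_iff)

lemma padd_L2P: "h1 \<in> L2P \<Longrightarrow> h2 \<in> L2P \<Longrightarrow> padd h1 h2 \<in> L2P"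
  unfolding padd_def L2P_def using L2_add by (auto simp: mem_Times_iff)

lemma pdiff_L2P: "h1 \<in> L2P \<Longrightarrow> h2 \<in> L2P \<Longrightarrow> pdiff h1 h2 \<in> L2P"
  unfolding pdiff_def L2P_def using L2_diff by (auto simp: mem_Times_iff)

lemma L2P_fst: "h \<in> L2P \<Longrightarrow> fst h \<in> L2" and L2P_snd: "h \<in> L2P \<Longrightarrow> snd h \<in> L2"
  unfolding L2P_def by (auto simp: mem_Times_iff)

lemma pnorm_pscale: "pnorm (pscale t h) = \<bar>t\<bar> * pnorm h"
proof -
  have "pnorm (pscale t h) = sqrt (t^2 * (nsq (fst h) + nsq (snd h)))"
    unfolding pnorm_nsq pscale_def by (simp add: nsq_scale algebra_simps)
  then show ?thesis unfolding pnorm_nsq by (simp add: real_sqrt_mult)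
qed

lemma pnorm_pdiff_sq:
  assumes "h1 \<in> L2P" "h2 \<in> L2P"
  shows "(pnorm (pdiff h1 h2))^2 \<le> 2 * (pnorm h1)^2 + 2 * (pnorm h2)^2"
proof -
  have b: "nsq (\<lambda>x. f1 x - f2 x) \<le> 2 * nsq f1 + 2 * nsq f2" if "f1 \<in> L2" "f2 \<in> L2" for f1 f2
    using nsq_bound2[where R="\<lambda>x. f1 x - f2 x", OF that, of 1 1] by (simp add: norm_triangle_ineq4)
  have "nsq (fst (pdiff h1 h2)) \<le> 2 * nsq (fst h1) + 2 * nsq (fst h2)"
    unfolding pdiff_def using b L2P_fst assms by simp
  moreover have "nsq (snd (pdiff h1 h2)) \<le> 2 * nsq (snd h1) + 2 * nsq (snd h2)"
    unfolding pdiff_def using b L2P_snd assms by simp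
  ultimately show ?thesis unfolding pnorm_nsq using nsq_nonneg
    by (simp add: add_nonneg_nonneg)
qed

context pctx begin

lemma Lop_Z: "Lop Z = Z"
  unfolding Lop_def Z_def aR_def FT_def wR_def by simp

lemma Lop_scale: "h \<in> L2P \<Longrightarrow> Lop (pscale t h) = pscale t (Lop h)"
  using Lop_lin[OF _ Z_L2P, of h t] unfolding Lop_Z
  by (simp add: padd_def pscale_def Z_def)

lemma p0_L2P: "(u, \<alpha>) \<in> L2P" unfolding L2P_def using uL aL by simp

lemma frechet_unique:
  assumes F: "frechet_deriv_at (D_g g \<theta>) (u, \<alpha>) L" and h: "h \<in> L2P"
  shows "pae_eq (L h) (Lop h)"
proof -
  have LL2: "\<And>h. h \<in> L2P \<Longrightarrow> L h \<in> L2P"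
   and lin: "\<And>a h1 h2. h1 \<in> L2P \<Longrightarrow> h2 \<in> L2P \<Longrightarrow> pae_eq (L (padd (pscale a h1) h2)) (padd (pscale a (L h1)) (L h2))"
   and rem: "\<And>\<epsilon>. \<epsilon> > 0 \<Longrightarrow> \<exists>\<delta>>0. \<forall>h\<in>L2P. pnorm h < \<delta> \<longrightarrow>
         pnorm (pdiff (pdiff (D_g g \<theta> (padd (u, \<alpha>) h)) (D_g g \<theta> (u, \<alpha>))) (L h)) \<le> \<epsilon> * pnorm h"
    using F unfolding frechet_deriv_at_def by blast+
  have rem0: "\<And>\<epsilon>. \<epsilon> > 0 \<Longrightarrow> \<exists>\<delta>>0. \<forall>h\<in>L2P. pnorm h < \<delta> \<longrightarrow>
         pnorm (pdiff (pdiff (D_g g \<theta> (padd (u, \<alpha>) h)) (D_g g \<theta> (u, \<alpha>))) (Lop h)) \<le> \<epsilon> * pnorm h"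
    using frechet_Lop unfolding frechet_deriv_at_def by blast
  have "pae_eq (L (padd (pscale 1 Z) Z)) (padd (pscale 1 (L Z)) (L Z))" by (rule lin[OF Z_L2P Z_L2P])
  moreover have "padd (pscale 1 Z) Z = Z" unfolding padd_def pscale_def Z_def by simp
  ultimately have LZ: "(AE x in lebesgue. fst (L Z) x = 0) \<and> (AE x in lebesgue. snd (L Z) x = 0)"
    unfolding pae_eq_def padd_def pscale_def by (auto elim!: AE_mp)
  have hom: "(AE x in lebesgue. fst (L (pscale t h)) x = t * fst (L h) x) \<and>
             (AE x in lebesgue. snd (L (pscale t h)) x = t * snd (L h) x)" for t
  proof -
    have "pae_eq (L (padd (pscale t h) Z)) (padd (pscale t (L h)) (L Z))" by (rule lin[OF h Z_L2P])
    moreover have "padd (pscale t h) Z = pscale t h" unfolding padd_def pscale_def Z_def by simp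
    ultimately show ?thesis using LZ unfolding pae_eq_def padd_def pscale_def by (auto elim!: AE_mp)
  qed
  define d where "d = pdiff (L h) (Lop h)"
  have dL2: "d \<in> L2P" unfolding d_def by (intro pdiff_L2P LL2 Lop_L2P h)
  define N where "N = pnorm h"
  have N0: "0 \<le> N" unfolding N_def by (rule pnorm_nonneg)
  have key: "pnorm d \<le> 2 * \<epsilon> * N" if \<epsilon>: "\<epsilon> > 0" for \<epsilon>
  proof -
    obtain \<delta>1 where d1: "\<delta>1 > 0" "\<forall>h\<in>L2P. pnorm h < \<delta>1 \<longrightarrow>
         pnorm (pdiff (pdiff (D_g g \<theta> (padd (u, \<alpha>) h)) (D_g g \<theta> (u, \<alpha>))) (L h)) \<le> \<epsilon> * pnorm h"
      using rem[OF \<epsilon>] by blast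
    obtain \<delta>2 where d2: "\<delta>2 > 0" "\<forall>h\<in>L2P. pnorm h < \<delta>2 \<longrightarrow>
         pnorm (pdiff (pdiff (D_g g \<theta> (padd (u, \<alpha>) h)) (D_g g \<theta> (u, \<alpha>))) (Lop h)) \<le> \<epsilon> * pnorm h"
      using rem0[OF \<epsilon>] by blast
    define t where "t = min \<delta>1 \<delta>2 / (N + 1)"
    have t0: "0 < t" unfolding t_def using d1 d2 N0 by simp
    have tN: "t * N < min \<delta>1 \<delta>2"
    proof -
      have "t * N = min \<delta>1 \<delta>2 * (N / (N + 1))" unfolding t_def by simp
      also have "\<dots> < min \<delta>1 \<delta>2 * 1" using d1 d2 N0 by (intro mult_strict_left_mono) auto
      finally show ?thesis by simp
    qed
    define ht where "ht = pscale t h"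
    have htL: "ht \<in> L2P" unfolding ht_def by (rule pscale_L2P[OF h])
    have pht: "pnorm ht = t * N" unfolding ht_def N_def pnorm_pscale using t0 by simp
    define RL where "RL = pdiff (pdiff (D_g g \<theta> (padd (u, \<alpha>) ht)) (D_g g \<theta> (u, \<alpha>))) (L ht)"
    define R0 where "R0 = pdiff (pdiff (D_g g \<theta> (padd (u, \<alpha>) ht)) (D_g g \<theta> (u, \<alpha>))) (Lop ht)"
    have RLb: "pnorm RL \<le> \<epsilon> * (t * N)" unfolding RL_def using d1(2) htL tN pht by auto
    have R0b: "pnorm R0 \<le> \<epsilon> * (t * N)" unfolding R0_def using d2(2) htL tN pht by auto
    have DL: "D_g g \<theta> (padd (u, \<alpha>) ht) \<in> L2P" "D_g g \<theta> (u, \<alpha>) \<in> L2P"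
      by (intro D_in_L2P gL padd_L2P p0_L2P htL)+
    have RLL: "RL \<in> L2P" unfolding RL_def by (intro pdiff_L2P DL LL2 htL)
    have R0L: "R0 \<in> L2P" unfolding R0_def by (intro pdiff_L2P DL Lop_L2P htL)
    have "(pnorm (pdiff R0 RL))^2 \<le> 2 * (pnorm R0)^2 + 2 * (pnorm RL)^2"
      by (rule pnorm_pdiff_sq[OF R0L RLL])
    also have "\<dots> \<le> 2 * (\<epsilon> * (t * N))^2 + 2 * (\<epsilon> * (t * N))^2"
      using RLb R0b pnorm_nonneg[of RL] pnorm_nonneg[of R0]
      by (intro add_mono mult_left_mono power_mono) auto
    finally have s1: "(pnorm (pdiff R0 RL))^2 \<le> 4 * (\<epsilon> * (t * N))^2" by simp
    have e1: "pdiff R0 RL = pdiff (L ht) (Lop ht)"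
      unfolding R0_def RL_def pdiff_def by simp
    have Lht: "L ht \<in> L2P" by (rule LL2[OF htL])
    have Loht: "Lop ht \<in> L2P" by (rule Lop_L2P[OF htL])
    have ae1: "AE x in lebesgue. fst (pdiff (L ht) (Lop ht)) x = fst (pscale t d) x"
      using hom[of t] unfolding ht_def d_def Lop_scale[OF h] unfolding pdiff_def pscale_def
      by (auto elim!: AE_mp simp: algebra_simps)
    have ae2: "AE x in lebesgue. snd (pdiff (L ht) (Lop ht)) x = snd (pscale t d) x"
      using hom[of t] unfolding ht_def d_def Lop_scale[OF h] unfolding pdiff_def pscale_def
      by (auto elim!: AE_mp simp: algebra_simps)
    have m1: "fst (pdiff (L ht) (Lop ht)) \<in> borel_measurable lebesgue" "snd (pdiff (L ht) (Lop ht)) \<in> borel_measurable lebesgue"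
      using pdiff_L2P[OF Lht Loht] L2P_fst L2P_snd L2_meas by blast+
    have m2: "fst (pscale t d) \<in> borel_measurable lebesgue" "snd (pscale t d) \<in> borel_measurable lebesgue"
      using pscale_L2P[OF dL2] L2P_fst L2P_snd L2_meas by blast+
    have "pnorm (pdiff R0 RL) = pnorm (pscale t d)"
      unfolding e1 pnorm_nsq
      using nsq_cong_AE[OF m1(1) m2(1) ae1] nsq_cong_AE[OF m1(2) m2(2) ae2] by simp
    also have "\<dots> = t * pnorm d" unfolding pnorm_pscale using t0 by simp
    finally have "(t * pnorm d)^2 \<le> 4 * (\<epsilon> * (t * N))^2" using s1 by simp
    then have "t^2 * (pnorm d)^2 \<le> t^2 * (2 * \<epsilon> * N)^2" by (simp add: power_mult_distrib mult_ac)
    moreover have "0 < t^2" using t0 by simp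
    ultimately have "(pnorm d)^2 \<le> (2 * \<epsilon> * N)^2" by (simp only: mult_le_cancel_left_pos)
    then show ?thesis
    proof (rule power2_le_imp_le)
      show "0 \<le> 2 * \<epsilon> * N" using \<epsilon> N0 by simp
    qed
  qed
  have "pnorm d \<le> 0"
  proof (rule field_le_epsilon)
    fix e :: real assume e: "0 < e"
    have "pnorm d \<le> 2 * (e / (2 * (N + 1))) * N" by (rule key) (use e N0 in simp)
    also have "\<dots> = e * (N / (N + 1))"
    proof -
      have "N + 1 \<noteq> 0" using N0 by linarith
      then show ?thesis by (simp add: divide_simps)
    qed
    also have "\<dots> \<le> e * 1" using e N0 by (intro mult_left_mono) auto
    finally show "pnorm d \<le> 0 + e" by simp
  qed
  then have "pnorm d = 0" using pnorm_nonneg[of d] by simp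
  then have "nsq (fst d) + nsq (snd d) = 0" unfolding pnorm_nsq
    using nsq_nonneg[of "fst d"] nsq_nonneg[of "snd d"] by simp
  then have "nsq (fst d) = 0" "nsq (snd d) = 0"
    using nsq_nonneg[of "fst d"] nsq_nonneg[of "snd d"] by linarith+
  then have "AE x in lebesgue. fst d x = 0" "AE x in lebesgue. snd d x = 0"
    using nsq_zero_AE L2P_fst[OF dL2] L2P_snd[OF dL2] by blast+
  then show ?thesis unfolding pae_eq_def d_def pdiff_def by (auto elim!: AE_mp)
qed

end

lemma integrable_bmult:
  fixes f c :: "real^3 \<Rightarrow> 'b::{real_normed_field, banach, second_countable_topology}"
  assumes "integrable lebesgue f" "c \<in> borel_measurable lebesgue" "\<And>x. norm (c x) \<le> B"
  shows "integrable lebesgue (\<lambda>x. c x * f x)"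
proof (rule Bochner_Integration.integrable_bound[OF integrable_mult_right[OF integrable_norm[OF assms(1)], of B]])
  show "(\<lambda>x. c x * f x) \<in> borel_measurable lebesgue" using assms by measurable
  show "AE x in lebesgue. norm (c x * f x) \<le> norm (B * norm (f x))"
  proof (rule AE_I2)
    fix x
    have "norm (c x * f x) \<le> B * norm (f x)"
      using assms(3)[of x] by (simp add: norm_mult mult_right_mono)
    also have "\<dots> \<le> norm (B * norm (f x))" by simp
    finally show "norm (c x * f x) \<le> norm (B * norm (f x))" .
  qed
qed

lemma alg1:
  fixes V1 V2 U E :: complex and \<theta> a1 a2 :: real
  assumes "cmod E = 1"
  shows "Im (cnj (V1 * E - \<i> * complex_of_real \<theta> * complex_of_real a1 * U * E) *
              (V2 * E - \<i> * complex_of_real \<theta> * complex_of_real a2 * U * E))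
       = Im (cnj V1 * V2) + \<theta> * (a1 * Re (cnj U * V2) - a2 * Re (cnj U * V1))"
proof -
  have ce: "cnj E * E = 1"
    using complex_norm_square[of E] assms by (simp add: mult.commute)
  have "cnj (V1 * E - \<i> * complex_of_real \<theta> * complex_of_real a1 * U * E) *
              (V2 * E - \<i> * complex_of_real \<theta> * complex_of_real a2 * U * E)
     = (cnj E * E) * ((cnj V1 + \<i> * complex_of_real \<theta> * complex_of_real a1 * cnj U) *
                      (V2 - \<i> * complex_of_real \<theta> * complex_of_real a2 * U))"
    by (simp add: algebra_simps)
  also have "\<dots> = (cnj V1 + \<i> * complex_of_real \<theta> * complex_of_real a1 * cnj U) *
                      (V2 - \<i> * complex_of_real \<theta> * complex_of_real a2 * U)"
    unfolding ce by simp
  finally have eq: "cnj (V1 * E - \<i> * complex_of_real \<theta> * complex_of_real a1 * U * E) *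
              (V2 * E - \<i> * complex_of_real \<theta> * complex_of_real a2 * U * E)
     = (cnj V1 + \<i> * complex_of_real \<theta> * complex_of_real a1 * cnj U) *
                      (V2 - \<i> * complex_of_real \<theta> * complex_of_real a2 * U)" .
  show ?thesis unfolding eq by (simp add: algebra_simps)
qed

lemma alg2:
  fixes B1 B2 G F1 F2 :: complex and \<theta> :: real
  shows "Im (cnj (B1 - \<i> * complex_of_real \<theta> * G * F1) * (B2 - \<i> * complex_of_real \<theta> * G * F2))
     = Im (cnj B1 * B2) - \<theta> * Re (cnj B1 * G * F2) + \<theta> * Re (cnj (G * F1) * B2)
       + \<theta>^2 * ((cmod G)^2 * Im (cnj F1 * F2))"
  unfolding cmod_power2 by (simp add: algebra_simps power2_eq_square)

context pctx begin

definition fw :: "fn3 \<Rightarrow> fn3" where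
  "fw v = FT (\<lambda>x. complex_of_real (wR u v x))"

lemma fw_meas[measurable]: "v \<in> L2 \<Longrightarrow> fw v \<in> borel_measurable lebesgue"
  unfolding fw_def by (rule FT_meas) (use L2_meas in measurable)

lemma fw_bound: "v \<in> L2 \<Longrightarrow> cmod (fw v k) \<le> 2 * l2_norm u * l2_norm v"
  unfolding fw_def by (rule FTw_bound[OF uL])

lemma fw_conj: "fw v (- k) = cnj (fw v k)"
  unfolding fw_def by (rule FT_real_conj)

lemma cancel:
  assumes "\<beta> \<in> L2" "v \<in> L2"
  shows "integral\<^sup>L lebesgue (\<lambda>x. aR g \<beta> x * Re (cnj (u x) * v x))
       = integral\<^sup>L lebesgue (\<lambda>k. Re (cnj (\<beta> k) * g k * fw v k))"
proof -
  define \<phi> where "\<phi> = (\<lambda>k. g k * cnj (\<beta> k))"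
  have i\<phi>: "integrable lebesgue \<phi>" unfolding \<phi>_def by (rule integrable_L2_prod[OF gL L2_cnj[OF assms(1)]])
  have iw: "integrable lebesgue (\<lambda>x. complex_of_real (wR u v x))" by (rule wR_int_c[OF uL assms(2)])
  have pw: "(\<lambda>x. aR g \<beta> x * Re (cnj (u x) * v x)) = (\<lambda>x. Re (FT \<phi> x * complex_of_real (wR u v x)))"
    by (rule ext) (simp add: aR_def wR_def \<phi>_def)
  have i1: "integrable lebesgue (\<lambda>x. FT \<phi> x * complex_of_real (wR u v x))"
    by (rule integrable_bmult[OF iw FT_meas FT_bound]) (use i\<phi> in auto)
  have i2: "integrable lebesgue (\<lambda>k. fw v k * \<phi> k)"
    by (rule integrable_bmult[OF i\<phi> fw_meas[OF assms(2)] fw_bound[OF assms(2)]])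
  have "integral\<^sup>L lebesgue (\<lambda>x. aR g \<beta> x * Re (cnj (u x) * v x))
      = Re (integral\<^sup>L lebesgue (\<lambda>x. FT \<phi> x * complex_of_real (wR u v x)))"
    unfolding pw by (rule integral_Re[OF i1])
  also have "\<dots> = Re (integral\<^sup>L lebesgue (\<lambda>k. \<phi> k * FT (\<lambda>x. complex_of_real (wR u v x)) k))"
    by (simp only: FT_fubini[OF i\<phi> iw])
  also have "\<dots> = Re (integral\<^sup>L lebesgue (\<lambda>k. fw v k * \<phi> k))"
    unfolding fw_def by (simp add: mult.commute)
  also have "\<dots> = integral\<^sup>L lebesgue (\<lambda>k. Re (fw v k * \<phi> k))"
    by (rule integral_Re[OF i2, symmetric])
  also have "\<dots> = integral\<^sup>L lebesgue (\<lambda>k. Re (cnj (\<beta> k) * g k * fw v k))"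
    unfolding \<phi>_def by (simp add: algebra_simps)
  finally show ?thesis .
qed

lemma odd_zero:
  assumes geven: "AE k in lebesgue. cmod (g (- k)) = cmod (g k)" and v: "v1 \<in> L2" "v2 \<in> L2"
  shows "integral\<^sup>L lebesgue (\<lambda>k. (cmod (g k))^2 * Im (cnj (fw v1 k) * fw v2 k)) = 0"
proof -
  define \<psi> where "\<psi> = (\<lambda>k. (cmod (g k))^2 * Im (cnj (fw v1 k) * fw v2 k))"
  have [measurable]: "fw v1 \<in> borel_measurable lebesgue" "fw v2 \<in> borel_measurable lebesgue"
    using fw_meas v by auto
  have m: "\<psi> \<in> borel_measurable lebesgue" unfolding \<psi>_def by measurable
  have mr: "(\<lambda>k. \<psi> (- k)) \<in> borel_measurable lebesgue"
    by (rule measurable_compose[OF uminus_leb_meas m])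
  have mn: "(\<lambda>k. - \<psi> k) \<in> borel_measurable lebesgue" using m by measurable
  have ae: "AE k in lebesgue. \<psi> (- k) = - \<psi> k"
    using geven
  proof (rule AE_mp, intro AE_I2 impI)
    fix k assume "cmod (g (- k)) = cmod (g k)"
    then show "\<psi> (- k) = - \<psi> k" unfolding \<psi>_def fw_conj by (simp add: algebra_simps)
  qed
  have "integral\<^sup>L lebesgue \<psi> = integral\<^sup>L lebesgue (\<lambda>k. \<psi> (- k))"
    by (rule integral_reflect3[OF m, symmetric])
  also have "\<dots> = integral\<^sup>L lebesgue (\<lambda>k. - \<psi> k)"
    by (rule integral_cong_AE[OF mr mn ae])
  also have "\<dots> = - integral\<^sup>L lebesgue \<psi>" by simp
  finally show ?thesis unfolding \<psi>_def by simp
qed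

end

context pctx begin

lemma Im_inner:
  assumes "f \<in> L2" "h \<in> L2"
  shows "Im (l2_inner f h) = integral\<^sup>L lebesgue (\<lambda>x. Im (cnj (f x) * h x))"
  unfolding l2_inner_def
  by (rule integral_Im[OF integrable_L2_prod[OF L2_cnj[OF assms(1)] assms(2)], symmetric])

lemma sympl_Lop:
  assumes geven: "AE k in lebesgue. cmod (g (- k)) = cmod (g k)"
    and q1: "q1 \<in> L2P" and q2: "q2 \<in> L2P"
  shows "Im (pinner (Lop q1) (Lop q2)) = Im (pinner q1 q2)"
proof -
  obtain v1 \<beta>1 where h1: "q1 = (v1, \<beta>1)" "v1 \<in> L2" "\<beta>1 \<in> L2" using q1 unfolding L2P_def by auto
  obtain v2 \<beta>2 where h2: "q2 = (v2, \<beta>2)" "v2 \<in> L2" "\<beta>2 \<in> L2" using q2 unfolding L2P_def by auto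
  have LL1: "Lop q1 \<in> L2P" and LL2: "Lop q2 \<in> L2P" using Lop_L2P q1 q2 by auto
  have [measurable]: "aR g \<beta>1 \<in> borel_measurable lebesgue" "aR g \<beta>2 \<in> borel_measurable lebesgue"
    using aR_meas L2_meas gL h1 h2 by auto
  have iRe: "integrable lebesgue (\<lambda>x. Re (cnj (u x) * v x))" if "v \<in> L2" for v
    by (rule integrable_bounded_linear[OF bounded_linear_Re integrable_L2_prod[OF L2_cnj[OF uL] that]])
  have ia1: "integrable lebesgue (\<lambda>x. aR g \<beta>1 x * Re (cnj (u x) * v2 x))"
    by (rule integrable_bmult[OF iRe[OF h2(2)]]) (use aR_bound[OF gL h1(3)] in auto)
  have ia2: "integrable lebesgue (\<lambda>x. aR g \<beta>2 x * Re (cnj (u x) * v1 x))"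
    by (rule integrable_bmult[OF iRe[OF h1(2)]]) (use aR_bound[OF gL h2(3)] in auto)
  have iv: "integrable lebesgue (\<lambda>x. Im (cnj (v1 x) * v2 x))"
    by (rule integrable_bounded_linear[OF bounded_linear_Im integrable_L2_prod[OF L2_cnj[OF h1(2)] h2(2)]])
  have ib: "integrable lebesgue (\<lambda>x. Im (cnj (\<beta>1 x) * \<beta>2 x))"
    by (rule integrable_bounded_linear[OF bounded_linear_Im integrable_L2_prod[OF L2_cnj[OF h1(3)] h2(3)]])
  have ij1c: "integrable lebesgue (\<lambda>k. fw v2 k * (cnj (\<beta>1 k) * g k))"
    by (rule integrable_bmult[OF integrable_L2_prod[OF L2_cnj[OF h1(3)] gL] fw_meas[OF h2(2)] fw_bound[OF h2(2)]])
  have ij1: "integrable lebesgue (\<lambda>k. Re (cnj (\<beta>1 k) * g k * fw v2 k))"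
    using integrable_bounded_linear[OF bounded_linear_Re ij1c] by (simp add: mult_ac)
  have ij2c: "integrable lebesgue (\<lambda>k. cnj (fw v1 k) * (cnj (g k) * \<beta>2 k))"
    by (rule integrable_bmult[OF integrable_L2_prod[OF L2_cnj[OF gL] h2(3)]])
       (use fw_meas[OF h1(2)] fw_bound[OF h1(2)] in auto)
  have ij2: "integrable lebesgue (\<lambda>k. Re (cnj (g k * fw v1 k) * \<beta>2 k))"
    using integrable_bounded_linear[OF bounded_linear_Re ij2c] by (simp add: mult_ac)
  have ig: "integrable lebesgue (\<lambda>k. (cmod (g k))^2 * Im (cnj (fw v1 k) * fw v2 k))"
  proof -
    have "integrable lebesgue (\<lambda>k. Im (cnj (fw v1 k) * fw v2 k) * (cmod (g k))^2)"
    proof (rule integrable_bmult[OF L2_int[OF gL]])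
      show "(\<lambda>k. Im (cnj (fw v1 k) * fw v2 k)) \<in> borel_measurable lebesgue"
        using fw_meas h1 h2 by measurable
      fix k
      have "norm (Im (cnj (fw v1 k) * fw v2 k)) \<le> cmod (cnj (fw v1 k) * fw v2 k)" unfolding real_norm_def by (rule abs_Im_le_cmod)
      also have "\<dots> = cmod (fw v1 k) * cmod (fw v2 k)" by (simp add: norm_mult)
      also have "\<dots> \<le> (2 * l2_norm u * l2_norm v1) * (2 * l2_norm u * l2_norm v2)"
        by (intro mult_mono fw_bound h1(2) h2(2)) (auto simp: l2_norm_nonneg)
      finally show "norm (Im (cnj (fw v1 k) * fw v2 k)) \<le> (2 * l2_norm u * l2_norm v1) * (2 * l2_norm u * l2_norm v2)" .
    qed
    then show ?thesis by (simp add: mult.commute)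
  qed
  have F1: "Im (l2_inner (fst (Lop q1)) (fst (Lop q2)))
      = integral\<^sup>L lebesgue (\<lambda>x. Im (cnj (v1 x) * v2 x))
        + \<theta> * (integral\<^sup>L lebesgue (\<lambda>x. aR g \<beta>1 x * Re (cnj (u x) * v2 x))
               - integral\<^sup>L lebesgue (\<lambda>x. aR g \<beta>2 x * Re (cnj (u x) * v1 x)))"
  proof -
    have "Im (l2_inner (fst (Lop q1)) (fst (Lop q2))) = integral\<^sup>L lebesgue (\<lambda>x. Im (cnj (fst (Lop q1) x) * fst (Lop q2) x))"
      by (rule Im_inner[OF L2P_fst[OF LL1] L2P_fst[OF LL2]])
    also have "\<dots> = integral\<^sup>L lebesgue (\<lambda>x. Im (cnj (v1 x) * v2 x)
        + \<theta> * (aR g \<beta>1 x * Re (cnj (u x) * v2 x) - aR g \<beta>2 x * Re (cnj (u x) * v1 x)))"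
      unfolding h1(1) h2(1) Lop_def by (simp only: prod.sel alg1[OF E_norm])
    also have "\<dots> = integral\<^sup>L lebesgue (\<lambda>x. Im (cnj (v1 x) * v2 x))
        + \<theta> * (integral\<^sup>L lebesgue (\<lambda>x. aR g \<beta>1 x * Re (cnj (u x) * v2 x))
               - integral\<^sup>L lebesgue (\<lambda>x. aR g \<beta>2 x * Re (cnj (u x) * v1 x)))"
      using iv ia1 ia2 by simp
    finally show ?thesis .
  qed
  have F2: "Im (l2_inner (snd (Lop q1)) (snd (Lop q2)))
      = integral\<^sup>L lebesgue (\<lambda>x. Im (cnj (\<beta>1 x) * \<beta>2 x))
        - \<theta> * integral\<^sup>L lebesgue (\<lambda>k. Re (cnj (\<beta>1 k) * g k * fw v2 k))
        + \<theta> * integral\<^sup>L lebesgue (\<lambda>k. Re (cnj (g k * fw v1 k) * \<beta>2 k))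
        + \<theta>^2 * integral\<^sup>L lebesgue (\<lambda>k. (cmod (g k))^2 * Im (cnj (fw v1 k) * fw v2 k))"
  proof -
    have "Im (l2_inner (snd (Lop q1)) (snd (Lop q2))) = integral\<^sup>L lebesgue (\<lambda>x. Im (cnj (snd (Lop q1) x) * snd (Lop q2) x))"
      by (rule Im_inner[OF L2P_snd[OF LL1] L2P_snd[OF LL2]])
    also have "\<dots> = integral\<^sup>L lebesgue (\<lambda>k. Im (cnj (\<beta>1 k) * \<beta>2 k)
        - \<theta> * Re (cnj (\<beta>1 k) * g k * fw v2 k) + \<theta> * Re (cnj (g k * fw v1 k) * \<beta>2 k)
        + \<theta>^2 * ((cmod (g k))^2 * Im (cnj (fw v1 k) * fw v2 k)))"
      unfolding h1(1) h2(1) Lop_def fw_def[symmetric] by (simp only: prod.sel alg2)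
    also have "\<dots> = integral\<^sup>L lebesgue (\<lambda>x. Im (cnj (\<beta>1 x) * \<beta>2 x))
        - \<theta> * integral\<^sup>L lebesgue (\<lambda>k. Re (cnj (\<beta>1 k) * g k * fw v2 k))
        + \<theta> * integral\<^sup>L lebesgue (\<lambda>k. Re (cnj (g k * fw v1 k) * \<beta>2 k))
        + \<theta>^2 * integral\<^sup>L lebesgue (\<lambda>k. (cmod (g k))^2 * Im (cnj (fw v1 k) * fw v2 k))"
      using ib ij1 ij2 ig by simp
    finally show ?thesis .
  qed
  have C1: "integral\<^sup>L lebesgue (\<lambda>x. aR g \<beta>1 x * Re (cnj (u x) * v2 x))
      = integral\<^sup>L lebesgue (\<lambda>k. Re (cnj (\<beta>1 k) * g k * fw v2 k))"
    by (rule cancel[OF h1(3) h2(2)])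
  have C2: "integral\<^sup>L lebesgue (\<lambda>x. aR g \<beta>2 x * Re (cnj (u x) * v1 x))
      = integral\<^sup>L lebesgue (\<lambda>k. Re (cnj (g k * fw v1 k) * \<beta>2 k))"
  proof -
    have "(\<lambda>k. Re (cnj (\<beta>2 k) * g k * fw v1 k)) = (\<lambda>k. Re (cnj (g k * fw v1 k) * \<beta>2 k))"
    proof (rule ext)
      fix k
      have r: "Re (cnj w) = Re w" for w :: complex by simp
      have "Re (cnj (\<beta>2 k) * g k * fw v1 k) = Re (cnj (cnj (\<beta>2 k) * g k * fw v1 k))" by (rule r[symmetric])
      also have "cnj (cnj (\<beta>2 k) * g k * fw v1 k) = cnj (g k * fw v1 k) * \<beta>2 k" by (simp add: mult_ac)
      finally show "Re (cnj (\<beta>2 k) * g k * fw v1 k) = Re (cnj (g k * fw v1 k) * \<beta>2 k)" .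
    qed
    then show ?thesis using cancel[OF h2(3) h1(2)] by simp
  qed
  have Z0: "integral\<^sup>L lebesgue (\<lambda>k. (cmod (g k))^2 * Im (cnj (fw v1 k) * fw v2 k)) = 0"
    by (rule odd_zero[OF geven h1(2) h2(2)])
  have "Im (pinner (Lop q1) (Lop q2)) = Im (l2_inner (fst (Lop q1)) (fst (Lop q2))) + Im (l2_inner (snd (Lop q1)) (snd (Lop q2)))"
    unfolding pinner_def by simp
  also have "\<dots> = integral\<^sup>L lebesgue (\<lambda>x. Im (cnj (v1 x) * v2 x)) + integral\<^sup>L lebesgue (\<lambda>x. Im (cnj (\<beta>1 x) * \<beta>2 x))"
    unfolding F1 F2 C1 C2 Z0 by (simp add: algebra_simps)
  also have "\<dots> = Im (pinner q1 q2)"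
    unfolding pinner_def h1(1) h2(1) using Im_inner[OF h1(2) h2(2)] Im_inner[OF h1(3) h2(3)] by simp
  finally show ?thesis .
qed

end

lemma l2_inner_cong:
  assumes "f \<in> L2" "f' \<in> L2" "h \<in> L2" "h' \<in> L2"
    and "AE x in lebesgue. f x = f' x" "AE x in lebesgue. h x = h' x"
  shows "l2_inner f h = l2_inner f' h'"
  unfolding l2_inner_def
proof (rule integral_cong_AE)
  show "(\<lambda>x. cnj (f x) * h x) \<in> borel_measurable lebesgue"
    using L2_meas[OF assms(1)] L2_meas[OF assms(3)] by measurable
  show "(\<lambda>x. cnj (f' x) * h' x) \<in> borel_measurable lebesgue"
    using L2_meas[OF assms(2)] L2_meas[OF assms(4)] by measurable
  show "AE x in lebesgue. cnj (f x) * h x = cnj (f' x) * h' x"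
    using assms(5,6) by eventually_elim simp
qed

lemma pinner_cong:
  assumes "a \<in> L2P" "a' \<in> L2P" "b \<in> L2P" "b' \<in> L2P" "pae_eq a a'" "pae_eq b b'"
  shows "pinner a b = pinner a' b'"
  unfolding pinner_def
  using l2_inner_cong[OF L2P_fst[OF assms(1)] L2P_fst[OF assms(2)] L2P_fst[OF assms(3)] L2P_fst[OF assms(4)]]
        l2_inner_cong[OF L2P_snd[OF assms(1)] L2P_snd[OF assms(2)] L2P_snd[OF assms(3)] L2P_snd[OF assms(4)]]
        assms(5,6) unfolding pae_eq_def by simp

lemma even_odd_abs:
  assumes "even_fn g \<or> odd_fn g"
  shows "AE k in lebesgue. cmod (g (- k)) = cmod (g k)"
  using assms unfolding even_fn_def odd_fn_def
  by (auto elim!: AE_mp)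

theorem proposition6:
  fixes g :: fn3
  assumes "g \<in> L2"
    and "even_fn g \<or> odd_fn g"
  shows "\<forall>\<theta>::real. \<forall>p\<in>L2P.
           (\<exists>L. frechet_deriv_at (D_g g \<theta>) p L) \<and>
           (\<forall>L. frechet_deriv_at (D_g g \<theta>) p L \<longrightarrow>
              (\<forall>q1\<in>L2P. \<forall>q2\<in>L2P.
                 Im (pinner (L q1) (L q2)) = Im (pinner q1 q2)))"
proof (intro allI ballI conjI impI)
  fix \<theta> :: real and p assume p: "p \<in> L2P"
  obtain u \<alpha> where pu: "p = (u, \<alpha>)" "u \<in> L2" "\<alpha> \<in> L2" using p unfolding L2P_def by auto
  interpret pctx g \<theta> u \<alpha> using assms(1) pu by unfold_locales auto
  show "\<exists>L. frechet_deriv_at (D_g g \<theta>) p L" unfolding pu(1) using frechet_Lop by blast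
  fix L q1 q2 assume F: "frechet_deriv_at (D_g g \<theta>) p L" and q: "q1 \<in> L2P" "q2 \<in> L2P"
  have F': "frechet_deriv_at (D_g g \<theta>) (u, \<alpha>) L" using F pu by simp
  have LL: "L q1 \<in> L2P" "L q2 \<in> L2P" using F' q unfolding frechet_deriv_at_def by auto
  have "pinner (L q1) (L q2) = pinner (Lop q1) (Lop q2)"
    by (rule pinner_cong[OF LL(1) Lop_L2P[OF q(1)] LL(2) Lop_L2P[OF q(2)]
          frechet_unique[OF F' q(1)] frechet_unique[OF F' q(2)]])
  also have "Im \<dots> = Im (pinner q1 q2)"
    by (rule sympl_Lop[OF even_odd_abs[OF assms(2)] q])
  finally show "Im (pinner (L q1) (L q2)) = Im (pinner q1 q2)" by simp
qed


end
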